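(* Let $f$ be as in the context. The $\mathrm{SL}(2,\mathbb{R})$-action $P\cdot(J,A)=(PJP^{-1},PA(P^{-1}\cdot)P^{-1})$ on $D^3(\mathcal{J}(\mathbb{R}^2))\setminus\{\text{zero section}\}\cong\mathcal{B}_0(T^2)$ is Hamiltonian with respect to $\boldsymbol{\omega}$, with moment map $\mu:\mathcal{B}_0(T^2)\to\mathfrak{sl}(2,\mathbb{R})^*$ given by $$\mu_{(J,A)}(X)=\big(1-f(\|A\|_0^2)\big)\,\mathrm{tr}(JX),\qquad X\in\mathfrak{sl}(2,\mathbb{R}).$$ That is: $\mu_{P\cdot(J,A)}=\mu_{(J,A)}\circ\mathrm{Ad}(P^{-1})$ for all $P\in\mathrm{SL}(2,\mathbb{R})$, and for every $X\in\mathfrak{sl}(2,\mathbb{R})$ the function $\mu^X(J,A)=\mu_{(J,A)}(X)$ satisfies $d\mu^X=\boldsymbol{\omega}(V_X,\cdot)$, where $V_X(p)=\frac{d}{dt}\big|_{t=0}\exp(tX)\cdot p$.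
   Context: $f:[0,+\infty)\to(-\infty,0]$ is smooth with $f'(t)<0$ for all $t\ge0$ and $\lim_{t\to+\infty}f(t)=-\infty$. $\mathfrak{sl}(2,\mathbb{R})$ is the space of traceless $2\times2$ real matrices. Let $\rho=dx_0\wedge dy_0$ on $\mathbb{R}^2$. $\mathcal{J}(\mathbb{R}^2)=\{J\in \mathrm{End}(\mathbb{R}^2): J^2=-\mathbb{1},\ \rho(v,Jv)>0 \text{ for some } v\neq 0\}$; $g_J(\cdot,\cdot):=\rho(\cdot,J\cdot)$. $T_J\mathcal{J}(\mathbb{R}^2)=\{\dot J: J\dot J+\dot JJ=0\}$, with $\langle \dot J,\dot J'\rangle_J=\tfrac12\mathrm{tr}(\dot J\dot J')$. $D^3(\mathcal{J}(\mathbb{R}^2))=\{(J,C)\in\mathcal{J}(\mathbb{R}^2)\times S_3(\mathbb{R}^2): C(J\cdot,J\cdot,J\cdot)=-C(J\cdot,\cdot,\cdot)\}$, $S_3(\mathbb{R}^2)$ the totally symmetric trilinear forms. Pick form $A=g_J^{-1}C$, i.e. $g_J(A(X)Y,Z)=C(X,Y,Z)$; identify $(J,C)$ with $(J,A)$; $A(P^{-1}\cdot)$ denotes pull-back of the form part. With a $g_J$-orthonormal basis $e_1,e_2$, $Je_1=e_2$, dual basis $e_i^*$, write $A=A_1e_1^*+A_2e_2^*$; $\langle A,B\rangle_J=\mathrm{tr}(A_1B_1+A_2B_2)$, $\|A\|_0^2=\tfrac14\langle A,A\rangle_J$, $A_{\mathrm{tr}}=\tfrac12\mathrm{tr}(A_1)\mathbb{1}e_1^*+\tfrac12\mathrm{tr}(A_2)\mathbb{1}e_2^*$,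 $A_0=A-A_{\mathrm{tr}}$; $(AJ)(X)=A(X)J$. Tangent vectors: $(\dot J,\dot A)$ with $\dot A=g_J^{-1}\dot C$. $\mathbf{g}_{(J,A)}((\dot J,\dot A),(\dot J',\dot A'))=(1-f(\|A\|_0^2))\langle\dot J,\dot J'\rangle_J+\tfrac{f'(\|A\|_0^2)}{3}\langle\dot A_0,\dot A'_0\rangle_J-\tfrac{f'(\|A\|_0^2)}{6}\langle\dot A_{\mathrm{tr}},\dot A'_{\mathrm{tr}}\rangle_J$; $\mathbf{I}_{(J,A)}(\dot J,\dot A)=(-J\dot J,-\dot AJ-A\dot J)$; $\boldsymbol{\omega}(\cdot,\cdot)=\mathbf{g}(\cdot,\mathbf{I}\cdot)$. $\mathcal{B}_0(T^2)$, the deformation space of properly convex $\mathbb{RP}^2$-structures on the torus, is identified with the complement of the zero section of $D^3(\mathcal{J}(\mathbb{R}^2))$. *)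

theory Defs
  imports "HOL-Analysis.Analysis"
begin

type_synonym mat2 = "real^2^2"
type_synonym ten3 = "real^2^2^2"  \<comment> \<open>coefficients C$i$j$k = C(b_i,b_j,b_k) in the standard basis\<close>

definition b :: "2 \<Rightarrow> real^2" where "b i = axis i 1"

definition rho :: "real^2 \<Rightarrow> real^2 \<Rightarrow> real" where
  "rho u v = u$1 * v$2 - u$2 * v$1"

definition gJ :: "mat2 \<Rightarrow> real^2 \<Rightarrow> real^2 \<Rightarrow> real" where
  "gJ J u v = rho u (J *v v)"

definition Jspace :: "mat2 set" where
  "Jspace = {J. J ** J = - mat 1 \<and> (\<exists>v. v \<noteq> 0 \<and> rho v (J *v v) > 0)}"

definition sl2 :: "mat2 set" where "sl2 = {X. trace X = 0}"
definition SL2 :: "mat2 set" where "SL2 = {P. det P = 1}"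

definition trilin :: "ten3 \<Rightarrow> real^2 \<Rightarrow> real^2 \<Rightarrow> real^2 \<Rightarrow> real" where
  "trilin C X Y Z = (\<Sum>i\<in>UNIV. \<Sum>j\<in>UNIV. \<Sum>k\<in>UNIV. C$i$j$k * X$i * Y$j * Z$k)"

definition totally_symmetric :: "ten3 \<Rightarrow> bool" where
  "totally_symmetric C \<longleftrightarrow> (\<forall>X Y Z. trilin C X Y Z = trilin C Y X Z \<and> trilin C X Y Z = trilin C X Z Y)"

definition D3 :: "(mat2 \<times> ten3) set" where
  "D3 = {(J, C). J \<in> Jspace \<and> totally_symmetric C \<and>
          (\<forall>X Y Z. trilin C (J *v X) (J *v Y) (J *v Z) = - trilin C (J *v X) Y Z)}"

text \<open>complement of the zero section, identified with B_0(T^2)\<close>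
definition B0 :: "(mat2 \<times> ten3) set" where
  "B0 = {(J, C). (J, C) \<in> D3 \<and> C \<noteq> 0}"

definition pickA :: "mat2 \<Rightarrow> ten3 \<Rightarrow> real^2 \<Rightarrow> mat2" where
  "pickA J C X = (THE M. \<forall>Y Z. gJ J (M *v Y) Z = trilin C X Y Z)"

text \<open>the g_J-orthonormal basis e1, e2 = J e1\<close>
definition e1 :: "mat2 \<Rightarrow> real^2" where
  "e1 J = (1 / sqrt (gJ J (b 1) (b 1))) *\<^sub>R b 1"
definition e2 :: "mat2 \<Rightarrow> real^2" where
  "e2 J = J *v e1 J"

definition ipJ :: "mat2 \<Rightarrow> mat2 \<Rightarrow> real" where
  "ipJ Jd Jd' = trace (Jd ** Jd') / 2"

definition ipA :: "mat2 \<Rightarrow> (real^2 \<Rightarrow> mat2) \<Rightarrow> (real^2 \<Rightarrow> mat2) \<Rightarrow> real" where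
  "ipA J A B' = trace (A (e1 J) ** B' (e1 J)) + trace (A (e2 J) ** B' (e2 J))"

definition norm0sq :: "mat2 \<Rightarrow> (real^2 \<Rightarrow> mat2) \<Rightarrow> real" where
  "norm0sq J A = ipA J A A / 4"

text \<open>A_tr = 1/2 tr(A_1) 1 e1* + 1/2 tr(A_2) 1 e2*, i.e. X |-> 1/2 tr(A(X)) 1\<close>
definition Atr :: "(real^2 \<Rightarrow> mat2) \<Rightarrow> real^2 \<Rightarrow> mat2" where
  "Atr A X = (trace (A X) / 2) *\<^sub>R mat 1"
definition A0 :: "(real^2 \<Rightarrow> mat2) \<Rightarrow> real^2 \<Rightarrow> mat2" where
  "A0 A X = A X - Atr A X"

text \<open>metric g at (J,A) on tangent vectors written as (Jdot, Adot) with Adot a form\<close>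
definition gmet :: "(real \<Rightarrow> real) \<Rightarrow> (real \<Rightarrow> real) \<Rightarrow> mat2 \<Rightarrow> (real^2 \<Rightarrow> mat2)
   \<Rightarrow> mat2 \<times> (real^2 \<Rightarrow> mat2) \<Rightarrow> mat2 \<times> (real^2 \<Rightarrow> mat2) \<Rightarrow> real" where
  "gmet f f' J A u w =
     (let n = norm0sq J A in
       (1 - f n) * ipJ (fst u) (fst w)
       + f' n / 3 * ipA J (A0 (snd u)) (A0 (snd w))
       - f' n / 6 * ipA J (Atr (snd u)) (Atr (snd w)))"

definition Icx :: "mat2 \<Rightarrow> (real^2 \<Rightarrow> mat2) \<Rightarrow> mat2 \<times> (real^2 \<Rightarrow> mat2) \<Rightarrow> mat2 \<times> (real^2 \<Rightarrow> mat2)" where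
  "Icx J A u = (- (J ** fst u), \<lambda>X. - (snd u X ** J) - (A X ** fst u))"

text \<open>omega at the point (J,C) on tangent vectors (Jdot,Cdot), with Adot = g_J^{-1} Cdot\<close>
definition omega :: "(real \<Rightarrow> real) \<Rightarrow> (real \<Rightarrow> real) \<Rightarrow> mat2 \<times> ten3
   \<Rightarrow> mat2 \<times> ten3 \<Rightarrow> mat2 \<times> ten3 \<Rightarrow> real" where
  "omega f f' p u w =
     (let J = fst p; A = pickA J (snd p) in
       gmet f f' J A (fst u, pickA J (snd u)) (Icx J A (fst w, pickA J (snd w))))"

text \<open>SL(2,R)-action P.(J,A) = (P J P^-1, P A(P^-1 .) P^-1), expressed back in C = g_J A\<close>
definition act :: "mat2 \<Rightarrow> mat2 \<times> ten3 \<Rightarrow> mat2 \<times> ten3" where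
  "act P p =
     (let J = fst p; A = pickA J (snd p); Pi = matrix_inv P;
          J' = P ** J ** Pi;
          A' = (\<lambda>X. P ** A (Pi *v X) ** Pi)
      in (J', \<chi> i j k. gJ J' (A' (b i) *v b j) (b k)))"

definition mu :: "(real \<Rightarrow> real) \<Rightarrow> mat2 \<times> ten3 \<Rightarrow> mat2 \<Rightarrow> real" where
  "mu f p X = (let J = fst p; A = pickA J (snd p) in (1 - f (norm0sq J A)) * trace (J ** X))"

fun matpow :: "mat2 \<Rightarrow> nat \<Rightarrow> mat2" where
  "matpow X 0 = mat 1"
| "matpow X (Suc n) = X ** matpow X n"

definition mexp :: "mat2 \<Rightarrow> mat2" where
  "mexp X = (\<Sum>n. (1 / fact n) *\<^sub>R matpow X n)"

end

theory Submission
  imports Defs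
begin


definition CX :: "ten3 \<Rightarrow> real^2 \<Rightarrow> 2 \<Rightarrow> 2 \<Rightarrow> real" where
  "CX C X j k = (\<Sum>i\<in>UNIV. C$i$j$k * X$i)"

definition Kinv :: "mat2 \<Rightarrow> mat2" where
  "Kinv J = (\<chi> i j. if i = 1 then (if j = 1 then - J$1$2 else - J$2$2) else (if j = 1 then J$1$1 else J$2$1))"

definition pA :: "mat2 \<Rightarrow> ten3 \<Rightarrow> real^2 \<Rightarrow> mat2" where
  "pA J C X = (\<chi> a c. \<Sum>j\<in>UNIV. Kinv J $ j $ a * CX C X c j)"

lemma Kinv_simps[simp]: "Kinv J $1$1 = - J$1$2" "Kinv J $1$2 = - J$2$2" "Kinv J $2$1 = J$1$1" "Kinv J $2$2 = J$2$1"
  by (simp_all add: Kinv_def)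

lemma pA_prop: "gJ J (pA J C X *v Y) Z = (J$1$1 * J$2$2 - J$1$2 * J$2$1) * trilin C X Y Z"
  by (simp add: gJ_def rho_def pA_def CX_def trilin_def matrix_vector_mult_def sum_2 algebra_simps)

lemma b_simps[simp]: "b 1 $ 1 = 1" "b 1 $ 2 = 0" "b 2 $ 1 = 0" "b 2 $ 2 = 1"
  by (simp_all add: b_def axis_def)

lemma gJ_inj:
  assumes "J$1$1 * J$2$2 - J$1$2 * J$2$1 = 1" and "\<forall>Z. gJ J u Z = gJ J v Z"
  shows "u = v"
proof -
  have e1: "u$1 * J$2$1 - u$2 * J$1$1 = v$1 * J$2$1 - v$2 * J$1$1"
    using assms(2)[rule_format, of "b 1"] by (simp add: gJ_def rho_def matrix_vector_mult_def sum_2)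
  have e2: "u$1 * J$2$2 - u$2 * J$1$2 = v$1 * J$2$2 - v$2 * J$1$2"
    using assms(2)[rule_format, of "b 2"] by (simp add: gJ_def rho_def matrix_vector_mult_def sum_2)
  have "u$1 = v$1" using e1 e2 assms(1) by algebra
  moreover have "u$2 = v$2" using e1 e2 assms(1) by algebra
  ultimately show ?thesis by (simp add: vec_eq_iff forall_2)
qed

lemma pickA_eq:
  assumes "J$1$1 * J$2$2 - J$1$2 * J$2$1 = 1"
  shows "pickA J C X = pA J C X"
  unfolding pickA_def
proof (rule the_equality)
  show "\<forall>Y Z. gJ J (pA J C X *v Y) Z = trilin C X Y Z"
    using assms pA_prop by simp
  fix M assume M: "\<forall>Y Z. gJ J (M *v Y) Z = trilin C X Y Z"
  have "\<forall>Y. M *v Y = pA J C X *v Y" using M assms pA_prop gJ_inj[OF assms] by simp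
  then show "M = pA J C X" by (metis matrix_eq)
qed
lemma Jspace_char:
  assumes "J \<in> Jspace"
  shows "J$2$2 = - J$1$1" "J$1$1 ^ 2 + J$1$2 * J$2$1 = -1" "J$2$1 > 0"
proof -
  have JJ: "J ** J = - mat 1" using assms by (simp add: Jspace_def)
  have q11: "J$1$1 * J$1$1 + J$1$2 * J$2$1 = -1"
    using arg_cong[OF JJ, of "\<lambda>M. M$1$1"] by (simp add: matrix_matrix_mult_def sum_2 mat_def)
  have q12: "J$1$2 * (J$1$1 + J$2$2) = 0"
    using arg_cong[OF JJ, of "\<lambda>M. M$1$2"] by (simp add: matrix_matrix_mult_def sum_2 mat_def algebra_simps)
  have q21: "J$2$1 * (J$1$1 + J$2$2) = 0"
    using arg_cong[OF JJ, of "\<lambda>M. M$2$1"] by (simp add: matrix_matrix_mult_def sum_2 mat_def algebra_simps)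
  have tr: "J$2$2 = - J$1$1"
  proof (rule ccontr)
    assume "J$2$2 \<noteq> - J$1$1"
    then have "J$1$2 = 0" "J$2$1 = 0" using q12 q21 by auto
    then have "J$1$1 * J$1$1 = -1" using q11 by simp
    moreover have "J$1$1 * J$1$1 \<ge> 0" by simp
    ultimately show False by linarith
  qed
  show "J$2$2 = - J$1$1" by (fact tr)
  show h2: "J$1$1 ^ 2 + J$1$2 * J$2$1 = -1" using q11 by (simp add: power2_eq_square)
  obtain v where v: "rho v (J *v v) > 0" using assms by (auto simp: Jspace_def)
  have rv: "rho v (J *v v) = J$2$1 * (v$1)^2 - 2 * J$1$1 * v$1 * v$2 - J$1$2 * (v$2)^2"
    using tr by (simp add: rho_def matrix_vector_mult_def sum_2 algebra_simps power2_eq_square)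
  have key: "J$2$1 * rho v (J *v v) = (J$2$1 * v$1 - J$1$1 * v$2)^2 + (v$2)^2"
    unfolding rv using h2 by algebra
  show "J$2$1 > 0"
  proof (rule ccontr)
    assume "\<not> J$2$1 > 0"
    then have "J$2$1 * rho v (J *v v) \<le> 0" using v by (simp add: mult_nonpos_nonneg)
    then have "v$2 = 0" "J$2$1 * v$1 - J$1$1 * v$2 = 0" using key by (smt (verit) zero_le_power2 power_zero_numeral zero_eq_power2)+
    then have "J$2$1 * v$1 = 0" by simp
    then have "rho v (J *v v) = 0" using rv \<open>v$2 = 0\<close> by (simp add: power2_eq_square)
    then show False using v by simp
  qed
qed


definition ipA' :: "mat2 \<Rightarrow> (real^2 \<Rightarrow> mat2) \<Rightarrow> (real^2 \<Rightarrow> mat2) \<Rightarrow> real" where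
  "ipA' J A B = (trace (A (b 1) ** B (b 1)) + trace (A (J *v b 1) ** B (J *v b 1))) / J$2$1"

definition CV :: "ten3 \<Rightarrow> mat2 \<Rightarrow> ten3" where
  "CV C X = (\<chi> i j k. - (\<Sum>a\<in>UNIV. C$a$j$k * X$a$i + C$i$a$k * X$a$j + C$i$j$a * X$a$k))"


definition NdS :: "mat2 \<Rightarrow> ten3 \<Rightarrow> mat2 \<Rightarrow> ten3 \<Rightarrow> real" where
  "NdS J C Jd Cd = (2 * C$1$1$1 * Cd$1$1$1 + 2 * (J$1$1 * C$1$1$1 + J$2$1 * C$1$1$2) *
      (Jd$1$1 * C$1$1$1 + J$1$1 * Cd$1$1$1 + Jd$2$1 * C$1$1$2 + J$2$1 * Cd$1$1$2)) / (J$2$1)^3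
    - 3 * ((C$1$1$1)^2 + (J$1$1 * C$1$1$1 + J$2$1 * C$1$1$2)^2) * Jd$2$1 / (J$2$1)^4"

lemma cert_rule: "(L::real) - R = (c * e - 1) * Q \<Longrightarrow> c * e = 1 \<Longrightarrow> L = R"
  by simp

definition mk2 :: "real \<Rightarrow> real \<Rightarrow> real \<Rightarrow> real \<Rightarrow> mat2" where
  "mk2 m11 m12 m21 m22 = (\<chi> i j. if i = 1 then (if j = 1 then m11 else m12) else (if j = 1 then m21 else m22))"

lemma mk2_simps: "mk2 m11 m12 m21 m22 $ 1 $ 1 = m11" "mk2 m11 m12 m21 m22 $ 1 $ 2 = m12"
  "mk2 m11 m12 m21 m22 $ 2 $ 1 = m21" "mk2 m11 m12 m21 m22 $ 2 $ 2 = m22"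
  by (simp_all add: mk2_def)

lemma mk2_eq: "(M = mk2 m11 m12 m21 m22) = (M$1$1 = m11 \<and> M$1$2 = m12 \<and> M$2$1 = m21 \<and> M$2$2 = m22)"
  by (auto simp: vec_eq_iff forall_2 mk2_simps)

lemma ipA'_A0: "ipA' J (A0 F) (A0 G) = (trace (F (b 1) ** G (b 1)) - trace (F (b 1)) * trace (G (b 1)) / 2
   + (trace (F (J *v b 1) ** G (J *v b 1)) - trace (F (J *v b 1)) * trace (G (J *v b 1)) / 2)) / J$2$1"
  by (simp add: ipA'_def A0_def Atr_def trace_def matrix_matrix_mult_def sum_2 mat_def algebra_simps add_divide_distrib diff_divide_distrib)

lemma ipA'_Atr: "ipA' J (Atr F) (Atr G) = (trace (F (b 1)) * trace (G (b 1)) / 2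
   + trace (F (J *v b 1)) * trace (G (J *v b 1)) / 2) / J$2$1"
  by (simp add: ipA'_def Atr_def trace_def matrix_matrix_mult_def sum_2 mat_def algebra_simps add_divide_distrib)

lemma core:
  fixes J Jd X :: mat2 and C Cd :: ten3
  assumes J: "J$1$1 = a" "J$1$2 = bb" "J$2$1 = c" "J$2$2 = -a" and c: "c > 0" and ce: "c * e = 1"
    and hb: "bb = -(1+a^2) * e"
    and Jd: "Jd$1$1 = pp" "Jd$1$2 = qq" "Jd$2$1 = ss" "Jd$2$2 = -pp"
    and hq: "qq = (a^2 + 1) * ss * e^2 - 2 * a * pp * e"
    and X: "X$1$1 = x" "X$1$2 = y" "X$2$1 = z" "X$2$2 = -x"
    and C: "C$1$1$1 = k0" "C$1$1$2 = k1" "C$1$2$1 = k1" "C$1$2$2 = k2" "C$2$1$1 = k1" "C$2$1$2 = k2" "C$2$2$1 = k2" "C$2$2$2 = k3"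
    and Cd: "Cd$1$1$1 = l0" "Cd$1$1$2 = l1" "Cd$1$2$1 = l1" "Cd$1$2$2 = l2" "Cd$2$1$1 = l1" "Cd$2$1$2 = l2" "Cd$2$2$1 = l2" "Cd$2$2$2 = l3"
    and k2: "k2 = -(a^2 + 1) * k0 * e^2 - 2 * a * k1 * e"
    and k3: "k3 = (3 * a^2 - 1) * k1 * e^2 + (2 * a^3 + 2 * a) * k0 * e^3"
    and l2: "l2 = -2 * a * k0 * pp * e^2 + 2 * (a^2+1) * k0 * ss * e^3 - (a^2+1) * l0 * e^2 - 2 * k1 * pp * e - 2 * a * l1 * e + 2 * a * k1 * ss * e^2"
    and l3: "l3 = 6 * a * k1 * pp * e^2 - 6 * a^2 * k1 * ss * e^3 + 2 * k1 * ss * e^3 + 3 * a^2 * l1 * e^2 - l1 * e^2 + 6 * a^2 * k0 * pp * e^3 + 2 * k0 * pp * e^3 - 6 * a^3 * k0 * ss * e^4 - 6 * a * k0 * ss * e^4 + 2 * a^3 * l0 * e^3 + 2 * a * l0 * e^3"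
  shows "1/3 * ipA' J (A0 (pA J (CV C X))) (A0 (\<lambda>Y. - (pA J Cd Y ** J) - (pA J C Y ** Jd)))
       - 1/6 * ipA' J (Atr (pA J (CV C X))) (Atr (\<lambda>Y. - (pA J Cd Y ** J) - (pA J C Y ** Jd)))
       = - NdS J C Jd Cd * trace (J ** X)"
proof -
  have d1: "\<And>t. t / c = t * e" "\<And>t. t / c^3 = t * e^3" "\<And>t. t / c^4 = t * e^4"
    using ce c by (simp_all add: field_simps flip: power_mult_distrib)
  have eV1: "pA J (CV C X) (b 1) = mk2 (- 3 * e * k1 * z - 3 * e * k0 * x - 1 * a * k1 * x - 1 * a * k0 * y + 2 * a * e^2 * k0 * z + 1 * a^2 * e * k1 * z - 3 * a^2 * e * k0 * x + 2 * a^3 * e^2 * k0 * z) (- 1 * e * k1 * x - 1 * e * k0 * y + 2 * e^3 * k0 * z - 2 * a * k1 * y + 5 * a * e^2 * k1 * z - 1 * a * e^2 * k0 * x - 3 * a^2 * e * k1 * x - 1 * a^2 * e * k0 * y + 2 * a^2 * e^3 * k0 * z + 1 * a^3 * e^2 * k1 * z - 1 * a^3 * e^2 * k0 * x) (2 * e * k0 * z - 1 * c * k1 * x - 1 * c * k0 * y + 1 * a * k1 * z - 3 * a * k0 * x + 2 * a^2 * e * k0 * z) (1 * e * k1 * z - 1 * e * k0 * x - 2 * c * k1 * y - 3 * a * k1 * x - 1 * a * k0 * y + 1 * a^2 * e * k1 * z - 1 * a^2 * e * k0 * x)"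
    unfolding mk2_eq
  proof (intro conjI)
    show "(pA J (CV C X) (b 1)) $ 1 $ 1 = (- 3 * e * k1 * z - 3 * e * k0 * x - 1 * a * k1 * x - 1 * a * k0 * y + 2 * a * e^2 * k0 * z + 1 * a^2 * e * k1 * z - 3 * a^2 * e * k0 * x + 2 * a^3 * e^2 * k0 * z)"
      apply (simp only: pA_def CX_def CV_def Kinv_simps vec_lambda_beta sum_2 b_simps matrix_matrix_mult_def matrix_vector_mult_def trace_def mk2_simps vector_minus_component vector_uminus_component vector_add_component J Jd X C Cd hb hq k2 k3 l2 l3)
      apply algebra?
      done
  next
    show "(pA J (CV C X) (b 1)) $ 1 $ 2 = (- 1 * e * k1 * x - 1 * e * k0 * y + 2 * e^3 * k0 * z - 2 * a * k1 * y + 5 * a * e^2 * k1 * z - 1 * a * e^2 * k0 * x - 3 * a^2 * e * k1 * x - 1 * a^2 * e * k0 * y + 2 * a^2 * e^3 * k0 * z + 1 * a^3 * e^2 * k1 * z - 1 * a^3 * e^2 * k0 * x)"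
      apply (simp only: pA_def CX_def CV_def Kinv_simps vec_lambda_beta sum_2 b_simps matrix_matrix_mult_def matrix_vector_mult_def trace_def mk2_simps vector_minus_component vector_uminus_component vector_add_component J Jd X C Cd hb hq k2 k3 l2 l3)
      apply algebra?
      done
  next
    show "(pA J (CV C X) (b 1)) $ 2 $ 1 = (2 * e * k0 * z - 1 * c * k1 * x - 1 * c * k0 * y + 1 * a * k1 * z - 3 * a * k0 * x + 2 * a^2 * e * k0 * z)"
      apply (rule cert_rule[where c=c and e=e and Q="(2 * e * k0 * z + 4 * a * k1 * z + 2 * a^2 * e * k0 * z)"])
       apply (simp only: pA_def CX_def CV_def Kinv_simps vec_lambda_beta sum_2 b_simps matrix_matrix_mult_def matrix_vector_mult_def trace_def mk2_simps vector_minus_component vector_uminus_component vector_add_component J Jd X C Cd hb hq k2 k3 l2 l3)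
       apply algebra?
      by (fact ce)
  next
    show "(pA J (CV C X) (b 1)) $ 2 $ 2 = (1 * e * k1 * z - 1 * e * k0 * x - 2 * c * k1 * y - 3 * a * k1 * x - 1 * a * k0 * y + 1 * a^2 * e * k1 * z - 1 * a^2 * e * k0 * x)"
      apply (rule cert_rule[where c=c and e=e and Q="(1 * e * k1 * z - 1 * e * k0 * x - 2 * a * k1 * x - 2 * a * e^2 * k0 * z - 3 * a^2 * e * k1 * z - 1 * a^2 * e * k0 * x - 2 * a^3 * e^2 * k0 * z)"])
       apply (simp only: pA_def CX_def CV_def Kinv_simps vec_lambda_beta sum_2 b_simps matrix_matrix_mult_def matrix_vector_mult_def trace_def mk2_simps vector_minus_component vector_uminus_component vector_add_component J Jd X C Cd hb hq k2 k3 l2 l3)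
       apply algebra?
      by (fact ce)
  qed
  have eV2: "pA J (CV C X) (J *v b 1) = mk2 (- 1 * k1 * x - 1 * k0 * y + 2 * e^2 * k0 * z + 2 * a * e * k1 * z - 4 * a * e * k0 * x - 2 * a * c * k1 * y - 4 * a^2 * k1 * x - 2 * a^2 * k0 * y + 4 * a^2 * e^2 * k0 * z + 2 * a^3 * e * k1 * z - 4 * a^3 * e * k0 * x + 2 * a^4 * e^2 * k0 * z) (- 2 * k1 * y + 1 * e^2 * k1 * z - 1 * e^2 * k0 * x - 6 * a * e * k1 * x + 2 * a * e * k0 * y + 2 * a^2 * k1 * y + 3 * a^2 * e^2 * k1 * z + 3 * a^2 * e^2 * k0 * x + 4 * a^3 * e * k1 * x + 2 * a^3 * e * k0 * y - 2 * a^3 * e^3 * k0 * z - 2 * a^4 * e^2 * k1 * z + 4 * a^4 * e^2 * k0 * x - 2 * a^5 * e^3 * k0 * z) (1 * k1 * z - 1 * k0 * x - 2 * c^2 * k1 * y + 2 * a * e * k0 * z - 4 * a * c * k1 * x - 2 * a * c * k0 * y + 2 * a^2 * k1 * z - 4 * a^2 * k0 * x + 2 * a^3 * e * k0 * z) (- 3 * k1 * x + 3 * k0 * y + 2 * a * e * k1 * z + 4 * a * e * k0 * x + 2 * a * c * k1 * y + 4 * a^2 * k1 * x + 2 * a^2 * k0 * y - 2 * a^2 * e^2 * k0 * z - 2 * a^3 * e * k1 * z + 4 * a^3 * e * k0 * x - 2 * a^4 * e^2 * k0 * z)"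
    unfolding mk2_eq
  proof (intro conjI)
    show "(pA J (CV C X) (J *v b 1)) $ 1 $ 1 = (- 1 * k1 * x - 1 * k0 * y + 2 * e^2 * k0 * z + 2 * a * e * k1 * z - 4 * a * e * k0 * x - 2 * a * c * k1 * y - 4 * a^2 * k1 * x - 2 * a^2 * k0 * y + 4 * a^2 * e^2 * k0 * z + 2 * a^3 * e * k1 * z - 4 * a^3 * e * k0 * x + 2 * a^4 * e^2 * k0 * z)"
      apply (rule cert_rule[where c=c and e=e and Q="(- 1 * k1 * x - 1 * k0 * y + 2 * e^2 * k0 * z + 5 * a * e * k1 * z - 1 * a * e * k0 * x - 3 * a^2 * k1 * x - 1 * a^2 * k0 * y + 2 * a^2 * e^2 * k0 * z + 1 * a^3 * e * k1 * z - 1 * a^3 * e * k0 * x)"])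
       apply (simp only: pA_def CX_def CV_def Kinv_simps vec_lambda_beta sum_2 b_simps matrix_matrix_mult_def matrix_vector_mult_def trace_def mk2_simps vector_minus_component vector_uminus_component vector_add_component J Jd X C Cd hb hq k2 k3 l2 l3)
       apply algebra?
      by (fact ce)
  next
    show "(pA J (CV C X) (J *v b 1)) $ 1 $ 2 = (- 2 * k1 * y + 1 * e^2 * k1 * z - 1 * e^2 * k0 * x - 6 * a * e * k1 * x + 2 * a * e * k0 * y + 2 * a^2 * k1 * y + 3 * a^2 * e^2 * k1 * z + 3 * a^2 * e^2 * k0 * x + 4 * a^3 * e * k1 * x + 2 * a^3 * e * k0 * y - 2 * a^3 * e^3 * k0 * z - 2 * a^4 * e^2 * k1 * z + 4 * a^4 * e^2 * k0 * x - 2 * a^5 * e^3 * k0 * z)"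
      apply (rule cert_rule[where c=c and e=e and Q="(- 2 * k1 * y + 1 * e^2 * k1 * z - 1 * e^2 * k0 * x - 5 * a * e * k1 * x + 3 * a * e * k0 * y - 2 * a * e^3 * k0 * z + 4 * a^2 * k1 * y - 2 * a^2 * e^2 * k1 * z + 4 * a^2 * e^2 * k0 * x + 7 * a^3 * e * k1 * x + 3 * a^3 * e * k0 * y - 4 * a^3 * e^3 * k0 * z - 3 * a^4 * e^2 * k1 * z + 5 * a^4 * e^2 * k0 * x - 2 * a^5 * e^3 * k0 * z)"])
       apply (simp only: pA_def CX_def CV_def Kinv_simps vec_lambda_beta sum_2 b_simps matrix_matrix_mult_def matrix_vector_mult_def trace_def mk2_simps vector_minus_component vector_uminus_component vector_add_component J Jd X C Cd hb hq k2 k3 l2 l3)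
       apply algebra?
      by (fact ce)
  next
    show "(pA J (CV C X) (J *v b 1)) $ 2 $ 1 = (1 * k1 * z - 1 * k0 * x - 2 * c^2 * k1 * y + 2 * a * e * k0 * z - 4 * a * c * k1 * x - 2 * a * c * k0 * y + 2 * a^2 * k1 * z - 4 * a^2 * k0 * x + 2 * a^3 * e * k0 * z)"
      apply (rule cert_rule[where c=c and e=e and Q="(1 * k1 * z - 1 * k0 * x + 1 * c * e * k1 * z - 1 * c * e * k0 * x + 2 * a * e * k0 * z - 2 * a * c * k1 * x - 2 * a * c * e^2 * k0 * z + 5 * a^2 * k1 * z - 1 * a^2 * k0 * x - 3 * a^2 * c * e * k1 * z - 1 * a^2 * c * e * k0 * x + 2 * a^3 * e * k0 * z - 2 * a^3 * c * e^2 * k0 * z)"])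
       apply (simp only: pA_def CX_def CV_def Kinv_simps vec_lambda_beta sum_2 b_simps matrix_matrix_mult_def matrix_vector_mult_def trace_def mk2_simps vector_minus_component vector_uminus_component vector_add_component J Jd X C Cd hb hq k2 k3 l2 l3)
       apply algebra?
      by (fact ce)
  next
    show "(pA J (CV C X) (J *v b 1)) $ 2 $ 2 = (- 3 * k1 * x + 3 * k0 * y + 2 * a * e * k1 * z + 4 * a * e * k0 * x + 2 * a * c * k1 * y + 4 * a^2 * k1 * x + 2 * a^2 * k0 * y - 2 * a^2 * e^2 * k0 * z - 2 * a^3 * e * k1 * z + 4 * a^3 * e * k0 * x - 2 * a^4 * e^2 * k0 * z)"
      apply (rule cert_rule[where c=c and e=e and Q="(- 3 * k1 * x + 3 * k0 * y - 3 * c * e * k1 * x + 3 * c * e * k0 * y + 2 * a * e * k1 * z + 4 * a * e * k0 * x + 6 * a * c * k1 * y + 6 * a * c * e^2 * k0 * x + 5 * a^2 * k1 * x + 3 * a^2 * k0 * y - 4 * a^2 * e^2 * k0 * z + 9 * a^2 * c * e * k1 * x + 3 * a^2 * c * e * k0 * y - 6 * a^3 * e * k1 * z + 4 * a^3 * e * k0 * x + 6 * a^3 * c * e^2 * k0 * x - 4 * a^4 * e^2 * k0 * z)"])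
       apply (simp only: pA_def CX_def CV_def Kinv_simps vec_lambda_beta sum_2 b_simps matrix_matrix_mult_def matrix_vector_mult_def trace_def mk2_simps vector_minus_component vector_uminus_component vector_add_component J Jd X C Cd hb hq k2 k3 l2 l3)
       apply algebra?
      by (fact ce)
  qed
  have eW1: "- (pA J Cd (b 1) ** J) - (pA J C (b 1) ** Jd) = mk2 (- 1 * l1 - 1 * e * k1 * ss - 1 * e * k0 * pp + 1 * a * k1 * pp - 1 * a * e^2 * k0 * ss - 1 * a^2 * e * k1 * ss + 1 * a^2 * e * k0 * pp - 1 * a^3 * e^2 * k0 * ss) (1 * e * k1 * pp + 1 * e^2 * l0 - 1 * e^3 * k0 * ss + 2 * a * e * l1 - 1 * a * e^2 * k1 * ss + 1 * a * e^2 * k0 * pp - 1 * a^2 * e * k1 * pp + 1 * a^2 * e^2 * l0 + 1 * a^3 * e^2 * k1 * ss - 1 * a^3 * e^2 * k0 * pp + 1 * a^4 * e^3 * k0 * ss) (1 * l0 - 1 * e * k0 * ss + 1 * c * k1 * pp - 1 * a * k1 * ss + 1 * a * k0 * pp - 1 * a^2 * e * k0 * ss) (1 * l1 - 1 * e * k1 * ss - 1 * e * k0 * pp - 1 * a * k1 * pp + 1 * a * e^2 * k0 * ss + 1 * a^2 * e * k1 * ss - 1 * a^2 * e * k0 * pp + 1 * a^3 * e^2 * k0 * ss)"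
    unfolding mk2_eq
  proof (intro conjI)
    show "(- (pA J Cd (b 1) ** J) - (pA J C (b 1) ** Jd)) $ 1 $ 1 = (- 1 * l1 - 1 * e * k1 * ss - 1 * e * k0 * pp + 1 * a * k1 * pp - 1 * a * e^2 * k0 * ss - 1 * a^2 * e * k1 * ss + 1 * a^2 * e * k0 * pp - 1 * a^3 * e^2 * k0 * ss)"
      apply (rule cert_rule[where c=c and e=e and Q="(- 1 * l1 + 2 * a * k1 * pp + 1 * a * e * l0 - 2 * a * e^2 * k0 * ss + 1 * a^2 * l1 - 2 * a^2 * e * k1 * ss + 2 * a^2 * e * k0 * pp + 1 * a^3 * e * l0 - 2 * a^3 * e^2 * k0 * ss)"])
       apply (simp only: pA_def CX_def CV_def Kinv_simps vec_lambda_beta sum_2 b_simps matrix_matrix_mult_def matrix_vector_mult_def trace_def mk2_simps vector_minus_component vector_uminus_component vector_add_component J Jd X C Cd hb hq k2 k3 l2 l3)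
       apply algebra?
      by (fact ce)
  next
    show "(- (pA J Cd (b 1) ** J) - (pA J C (b 1) ** Jd)) $ 1 $ 2 = (1 * e * k1 * pp + 1 * e^2 * l0 - 1 * e^3 * k0 * ss + 2 * a * e * l1 - 1 * a * e^2 * k1 * ss + 1 * a * e^2 * k0 * pp - 1 * a^2 * e * k1 * pp + 1 * a^2 * e^2 * l0 + 1 * a^3 * e^2 * k1 * ss - 1 * a^3 * e^2 * k0 * pp + 1 * a^4 * e^3 * k0 * ss)"
      apply (simp only: pA_def CX_def CV_def Kinv_simps vec_lambda_beta sum_2 b_simps matrix_matrix_mult_def matrix_vector_mult_def trace_def mk2_simps vector_minus_component vector_uminus_component vector_add_component J Jd X C Cd hb hq k2 k3 l2 l3)
      apply algebra?
      done
  next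
    show "(- (pA J Cd (b 1) ** J) - (pA J C (b 1) ** Jd)) $ 2 $ 1 = (1 * l0 - 1 * e * k0 * ss + 1 * c * k1 * pp - 1 * a * k1 * ss + 1 * a * k0 * pp - 1 * a^2 * e * k0 * ss)"
      apply (rule cert_rule[where c=c and e=e and Q="(1 * l0 - 1 * e * k0 * ss + 2 * c * k1 * pp + 1 * c * e * l0 - 2 * c * e^2 * k0 * ss + 2 * a * k0 * pp + 2 * a * c * l1 - 2 * a * c * e * k1 * ss + 2 * a * c * e * k0 * pp + 1 * a^2 * l0 - 1 * a^2 * e * k0 * ss + 1 * a^2 * c * e * l0 - 2 * a^2 * c * e^2 * k0 * ss)"])
       apply (simp only: pA_def CX_def CV_def Kinv_simps vec_lambda_beta sum_2 b_simps matrix_matrix_mult_def matrix_vector_mult_def trace_def mk2_simps vector_minus_component vector_uminus_component vector_add_component J Jd X C Cd hb hq k2 k3 l2 l3)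
       apply algebra?
      by (fact ce)
  next
    show "(- (pA J Cd (b 1) ** J) - (pA J C (b 1) ** Jd)) $ 2 $ 2 = (1 * l1 - 1 * e * k1 * ss - 1 * e * k0 * pp - 1 * a * k1 * pp + 1 * a * e^2 * k0 * ss + 1 * a^2 * e * k1 * ss - 1 * a^2 * e * k0 * pp + 1 * a^3 * e^2 * k0 * ss)"
      apply (rule cert_rule[where c=c and e=e and Q="(1 * l1 - 1 * e * k1 * ss - 1 * e * k0 * pp - 2 * a * k1 * pp - 1 * a * e * l0 + 2 * a * e^2 * k0 * ss - 1 * a^2 * l1 + 1 * a^2 * e * k1 * ss - 3 * a^2 * e * k0 * pp - 1 * a^3 * e * l0 + 2 * a^3 * e^2 * k0 * ss)"])
       apply (simp only: pA_def CX_def CV_def Kinv_simps vec_lambda_beta sum_2 b_simps matrix_matrix_mult_def matrix_vector_mult_def trace_def mk2_simps vector_minus_component vector_uminus_component vector_add_component J Jd X C Cd hb hq k2 k3 l2 l3)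
       apply algebra?
      by (fact ce)
  qed
  have eW2: "- (pA J Cd (J *v b 1) ** J) - (pA J C (J *v b 1) ** Jd) = mk2 (1 * k1 * pp + 1 * e * l0 - 1 * e^2 * k0 * ss + 1 * a * l1 - 2 * a * e * k1 * ss + 1 * a^2 * e * l0 - 1 * a^2 * e^2 * k0 * ss) (1 * e * l1 - 1 * e^2 * k1 * ss - 1 * e^2 * k0 * pp - 4 * a * e * k1 * pp - 1 * a * e^2 * l0 + 4 * a * e^3 * k0 * ss - 1 * a^2 * e * l1 + 5 * a^2 * e^2 * k1 * ss - 3 * a^2 * e^2 * k0 * pp - 1 * a^3 * e^2 * l0 + 4 * a^3 * e^3 * k0 * ss) (- 1 * k1 * ss - 1 * k0 * pp + 1 * c * l1 + 1 * a * l0) (- 3 * k1 * pp - 1 * e * l0 + 3 * e^2 * k0 * ss - 1 * a * l1 + 4 * a * e * k1 * ss - 2 * a * e * k0 * pp - 1 * a^2 * e * l0 + 3 * a^2 * e^2 * k0 * ss)"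
    unfolding mk2_eq
  proof (intro conjI)
    show "(- (pA J Cd (J *v b 1) ** J) - (pA J C (J *v b 1) ** Jd)) $ 1 $ 1 = (1 * k1 * pp + 1 * e * l0 - 1 * e^2 * k0 * ss + 1 * a * l1 - 2 * a * e * k1 * ss + 1 * a^2 * e * l0 - 1 * a^2 * e^2 * k0 * ss)"
      apply (rule cert_rule[where c=c and e=e and Q="(1 * k1 * pp + 1 * e * l0 - 1 * e^2 * k0 * ss + 2 * c * e * k1 * pp + 1 * c * e^2 * l0 - 2 * c * e^3 * k0 * ss + 1 * a * l1 - 1 * a * e * k1 * ss + 1 * a * e * k0 * pp + 3 * a * c * e * l1 - 4 * a * c * e^2 * k1 * ss + 1 * a^2 * k1 * pp + 2 * a^2 * e * l0 - 2 * a^2 * e^2 * k0 * ss - 4 * a^2 * c * e * k1 * pp + 2 * a^2 * c * e^3 * k0 * ss + 1 * a^3 * l1 - 1 * a^3 * e * k1 * ss + 1 * a^3 * e * k0 * pp - 1 * a^3 * c * e * l1 + 4 * a^3 * c * e^2 * k1 * ss - 4 * a^3 * c * e^2 * k0 * pp + 1 * a^4 * e * l0 - 1 * a^4 * e^2 * k0 * ss - 1 * a^4 * c * e^2 * l0 + 4 * a^4 * c * e^3 * k0 * ss)"])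
       apply (simp only: pA_def CX_def CV_def Kinv_simps vec_lambda_beta sum_2 b_simps matrix_matrix_mult_def matrix_vector_mult_def trace_def mk2_simps vector_minus_component vector_uminus_component vector_add_component J Jd X C Cd hb hq k2 k3 l2 l3)
       apply algebra?
      by (fact ce)
  next
    show "(- (pA J Cd (J *v b 1) ** J) - (pA J C (J *v b 1) ** Jd)) $ 1 $ 2 = (1 * e * l1 - 1 * e^2 * k1 * ss - 1 * e^2 * k0 * pp - 4 * a * e * k1 * pp - 1 * a * e^2 * l0 + 4 * a * e^3 * k0 * ss - 1 * a^2 * e * l1 + 5 * a^2 * e^2 * k1 * ss - 3 * a^2 * e^2 * k0 * pp - 1 * a^3 * e^2 * l0 + 4 * a^3 * e^3 * k0 * ss)"
      apply (rule cert_rule[where c=c and e=e and Q="(1 * e * l1 - 1 * e^2 * k1 * ss - 1 * e^2 * k0 * pp - 5 * a * e * k1 * pp - 2 * a * e^2 * l0 + 5 * a * e^3 * k0 * ss - 3 * a^2 * e * l1 + 6 * a^2 * e^2 * k1 * ss - 4 * a^2 * e^2 * k0 * pp + 1 * a^3 * e * k1 * pp - 2 * a^3 * e^2 * l0 + 4 * a^3 * e^3 * k0 * ss - 1 * a^4 * e^2 * k1 * ss + 1 * a^4 * e^2 * k0 * pp - 1 * a^5 * e^3 * k0 * ss)"])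
       apply (simp only: pA_def CX_def CV_def Kinv_simps vec_lambda_beta sum_2 b_simps matrix_matrix_mult_def matrix_vector_mult_def trace_def mk2_simps vector_minus_component vector_uminus_component vector_add_component J Jd X C Cd hb hq k2 k3 l2 l3)
       apply algebra?
      by (fact ce)
  next
    show "(- (pA J Cd (J *v b 1) ** J) - (pA J C (J *v b 1) ** Jd)) $ 2 $ 1 = (- 1 * k1 * ss - 1 * k0 * pp + 1 * c * l1 + 1 * a * l0)"
      apply (rule cert_rule[where c=c and e=e and Q="(- 1 * k1 * ss - 1 * k0 * pp + 1 * c * l1 - 1 * c * e * k1 * ss - 1 * c * e * k0 * pp + 1 * c^2 * e * l1 - 2 * c^2 * e^2 * k1 * ss - 2 * c^2 * e^2 * k0 * pp + 1 * a * l0 + 2 * a * c * k1 * pp + 1 * a * c * e * l0 - 2 * a * c * e^2 * k0 * ss - 6 * a * c^2 * e * k1 * pp - 2 * a * c^2 * e^2 * l0 + 6 * a * c^2 * e^3 * k0 * ss + 1 * a^2 * k1 * ss + 1 * a^2 * k0 * pp + 3 * a^2 * c * l1 - 3 * a^2 * c * e * k1 * ss + 1 * a^2 * c * e * k0 * pp - 3 * a^2 * c^2 * e * l1 + 6 * a^2 * c^2 * e^2 * k1 * ss - 6 * a^2 * c^2 * e^2 * k0 * pp + 1 * a^3 * l0 + 1 * a^3 * c * e * l0 - 2 * a^3 * c * e^2 * k0 * ss - 2 * a^3 * c^2 * e^2 * l0 + 6 * a^3 * c^2 * e^3 * k0 * ss)"])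
       apply (simp only: pA_def CX_def CV_def Kinv_simps vec_lambda_beta sum_2 b_simps matrix_matrix_mult_def matrix_vector_mult_def trace_def mk2_simps vector_minus_component vector_uminus_component vector_add_component J Jd X C Cd hb hq k2 k3 l2 l3)
       apply algebra?
      by (fact ce)
  next
    show "(- (pA J Cd (J *v b 1) ** J) - (pA J C (J *v b 1) ** Jd)) $ 2 $ 2 = (- 3 * k1 * pp - 1 * e * l0 + 3 * e^2 * k0 * ss - 1 * a * l1 + 4 * a * e * k1 * ss - 2 * a * e * k0 * pp - 1 * a^2 * e * l0 + 3 * a^2 * e^2 * k0 * ss)"
      apply (rule cert_rule[where c=c and e=e and Q="(- 3 * k1 * pp - 1 * e * l0 + 3 * e^2 * k0 * ss - 3 * c * e * k1 * pp - 1 * c * e^2 * l0 + 3 * c * e^3 * k0 * ss - 1 * a * l1 + 4 * a * e * k1 * ss - 2 * a * e * k0 * pp - 3 * a * c * e * l1 + 6 * a * c * e^2 * k1 * ss - 1 * a^2 * k1 * pp - 2 * a^2 * e * l0 + 4 * a^2 * e^2 * k0 * ss + 3 * a^2 * c * e * k1 * pp - 1 * a^3 * l1 - 2 * a^3 * e * k0 * pp + 1 * a^3 * c * e * l1 - 2 * a^3 * c * e^2 * k1 * ss + 4 * a^3 * c * e^2 * k0 * pp - 1 * a^4 * e * l0 + 1 * a^4 * e^2 * k0 * ss + 1 * a^4 * c * e^2 * l0 - 3 * a^4 * c * e^3 * k0 * ss)"])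
       apply (simp only: pA_def CX_def CV_def Kinv_simps vec_lambda_beta sum_2 b_simps matrix_matrix_mult_def matrix_vector_mult_def trace_def mk2_simps vector_minus_component vector_uminus_component vector_add_component J Jd X C Cd hb hq k2 k3 l2 l3)
       apply algebra?
      by (fact ce)
  qed
  have tVW1: "trace (pA J (CV C X) (b 1) ** (- (pA J Cd (b 1) ** J) - (pA J C (b 1) ** Jd))) = (2 * k1^2 * ss * y - 2 * k1^2 * pp * x + 4 * e * k1 * l1 * z - 2 * e * k1 * l0 * x + 2 * e * k0 * l1 * x - 2 * e * k0 * l0 * y + 2 * e^2 * k1^2 * ss * z + 6 * e^2 * k0 * k1 * ss * x + 6 * e^2 * k0 * k1 * pp * z + 2 * e^2 * k0^2 * ss * y + 4 * e^2 * k0^2 * pp * x + 4 * e^3 * k0 * l0 * z - 4 * e^4 * k0^2 * ss * z - 2 * c * k1 * l1 * y - 4 * a * k1 * l1 * x - 2 * a * k1 * l0 * y - 2 * a * k0 * l1 * y + 6 * a * e * k1^2 * ss * x + 2 * a * e * k1^2 * pp * z + 4 * a * e * k0 * k1 * ss * y - 4 * a * e * k0 * k1 * pp * x + 6 * a * e^2 * k1 * l0 * z + 2 * a * e^2 * k0 * l1 * z - 4 * a * e^2 * k0 * l0 * x - 8 * a * e^3 * k0 * k1 * ss * z + 6 * a * e^3 * k0^2 * ss * x + 2 * a * e^3 * k0^2 * pp * z + 2 * a^2 * e * k1 * l1 * z - 4 * a^2 * e * k1 * l0 * x - 4 * a^2 * e * k0 * l1 * x - 2 * a^2 * e * k0 *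 l0 * y - 4 * a^2 * e^2 * k1^2 * ss * z + 12 * a^2 * e^2 * k0 * k1 * ss * x + 4 * a^2 * e^2 * k0 * k1 * pp * z + 2 * a^2 * e^2 * k0^2 * ss * y - 2 * a^2 * e^2 * k0^2 * pp * x + 6 * a^2 * e^3 * k0 * l0 * z - 8 * a^2 * e^4 * k0^2 * ss * z + 2 * a^3 * e^2 * k1 * l0 * z + 2 * a^3 * e^2 * k0 * l1 * z - 4 * a^3 * e^2 * k0 * l0 * x - 8 * a^3 * e^3 * k0 * k1 * ss * z + 6 * a^3 * e^3 * k0^2 * ss * x + 2 * a^3 * e^3 * k0^2 * pp * z + 2 * a^4 * e^3 * k0 * l0 * z - 4 * a^4 * e^4 * k0^2 * ss * z)"
    unfolding eV1 eW1
    apply (rule cert_rule[where c=c and e=e and Q="(2 * k1^2 * ss * y - 2 * k1^2 * pp * x - 1 * e * k1 * l0 * x - 1 * e * k0 * l0 * y + 1 * e^2 * k0 * k1 * ss * x + 2 * e^2 * k0 * k1 * pp * z + 1 * e^2 * k0^2 * ss * y - 2 * a * k1 * l1 * x - 2 * a * k0 * l1 * y + 1 * a * e * k1^2 * ss * x + 5 * a * e * k1^2 * pp * z - 1 * a * e * k0 * k1 * ss * y - 2 * a * e * k0 * k1 * pp * x - 1 * a * e * k0^2 * pp * y - 2 * a^2 * k1^2 * ss * y - 2 * a^2 * k1^2 * pp * x + 2 * a^2 * k0 * k1 * pp * y - 1 * a^2 * e * k1 * l0 * x - 1 * a^2 * e * k0 * l0 * y + 2 * a^2 * e^2 * k0 *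 k1 * pp * z - 1 * a^3 * e * k1^2 * ss * x + 1 * a^3 * e * k1^2 * pp * z - 3 * a^3 * e * k0 * k1 * ss * y + 1 * a^3 * e * k0^2 * pp * y - 1 * a^4 * e^2 * k0 * k1 * ss * x - 1 * a^4 * e^2 * k0^2 * ss * y)"])
     apply (simp only: matrix_matrix_mult_def trace_def mk2_simps vec_lambda_beta sum_2)
     apply algebra?
    by (fact ce)
  have tVW2: "trace (pA J (CV C X) (J *v b 1) ** (- (pA J Cd (J *v b 1) ** J) - (pA J C (J *v b 1) ** Jd))) = (4 * k1^2 * ss * y + 8 * k1^2 * pp * x - 6 * k0 * k1 * pp * y + 2 * e * k1 * l1 * z + 2 * e * k1 * l0 * x - 2 * e * k0 * l1 * x - 4 * e * k0 * l0 * y - 2 * e^2 * k1^2 * ss * z - 6 * e^2 * k0 * k1 * ss * x + 10 * e^2 * k0^2 * ss * y + 2 * e^2 * k0^2 * pp * x + 2 * e^3 * k0 * l0 * z - 2 * e^4 * k0^2 * ss * z - 4 * c * k1 * l1 * y - 8 * a * k1 * l1 * x - 4 * a * k1 * l0 * y - 4 * a * k0 * l1 * y - 8 * a * e * k1^2 * pp * z + 14 * a * e * k0 * k1 * ss * y + 4 * a * e * k0 * k1 * pp * x - 6 * a * e * k0^2 * pp * y + 4 * a * e^2 * k0 * l1 * z - 8 * a * e^2 * k0 * l0 * x + 2 * a * e^3 * k0 * k1 * ss * z + 12 * a * e^3 * k0^2 * ss * x - 2 * a * e^3 * k0^2 * pp * z + 4 * a^2 * e * k1 * l1 * z - 8 *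 a^2 * e * k1 * l0 * x - 8 * a^2 * e * k0 * l1 * x - 4 * a^2 * e * k0 * l0 * y + 4 * a^2 * e^2 * k1^2 * ss * z + 12 * a^2 * e^2 * k0 * k1 * ss * x - 10 * a^2 * e^2 * k0 * k1 * pp * z + 10 * a^2 * e^2 * k0^2 * ss * y - 4 * a^2 * e^2 * k0^2 * pp * x + 6 * a^2 * e^3 * k0 * l0 * z - 4 * a^2 * e^4 * k0^2 * ss * z + 4 * a^3 * e^2 * k1 * l0 * z + 4 * a^3 * e^2 * k0 * l1 * z - 8 * a^3 * e^2 * k0 * l0 * x + 2 * a^3 * e^3 * k0 * k1 * ss * z + 12 * a^3 * e^3 * k0^2 * ss * x - 2 * a^3 * e^3 * k0^2 * pp * z + 4 * a^4 * e^3 * k0 * l0 * z - 2 * a^4 * e^4 * k0^2 * ss * z)"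
    unfolding eV2 eW2
    apply (rule cert_rule[where c=c and e=e and Q="(2 * k1^2 * ss * y + 2 * k0 * k1 * pp * y + 1 * e * k1 * l1 * z - 1 * e * k0 * l1 * x - 2 * c * k1 * l1 * y + 2 * c * e * k1^2 * ss * y + 2 * c * e * k0 * k1 * pp * y - 10 * a * k1 * l1 * x - 2 * a * k1 * l0 * y + 4 * a * e * k1^2 * ss * x + 2 * a * e * k0 * k1 * ss * y + 4 * a * e * k0 * k1 * pp * x + 2 * a * e * k0^2 * pp * y + 8 * a * c * k1^2 * pp * y + 2 * a * c * e * k1 * l0 * y - 8 * a * c * e^2 * k0 * k1 * ss * y + 2 * a^2 * k1^2 * ss * y + 16 * a^2 * k1^2 * pp * x + 10 * a^2 * k0 * k1 * pp * y + 3 * a^2 * e * k1 * l1 * z + 4 * a^2 * e * k1 * l0 * x + 3 * a^2 * e * k0 * l1 * x + 2 * a^2 * e * k0 * l0 * y - 16 * a^2 * e^2 * k0 * k1 * ss * x - 8 * a^2 * e^2 * k0^2 * ss * y + 2 * a^2 * c * k1 * l1 * y - 10 * a^2 * c * e * k1^2 * ss * y + 6 * a^2 * c * e * k0 * k1 * pp * y + 8 * a^3 * k1 * l1 * x - 2 * a^3 * k1 * l0 * y + 4 * a^3 * k0 * l1 * y - 20 * a^3 * e * k1^2 * ss * x - 10 * a^3 * e * k0 * k1 * ss * y + 12 * a^3 * e * k0 * k1 * pp * x + 6 * a^3 * e * k0^2 * pp * y - 2 * a^3 * e^2 * k0 * l1 * z + 2 * a^3 * c * e * k1 * l0 * y -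 8 * a^3 * c * e^2 * k0 * k1 * ss * y - 2 * a^4 * e * k1 * l1 * z + 4 * a^4 * e * k1 * l0 * x + 4 * a^4 * e * k0 * l1 * x + 2 * a^4 * e * k0 * l0 * y - 16 * a^4 * e^2 * k0 * k1 * ss * x - 8 * a^4 * e^2 * k0^2 * ss * y - 2 * a^5 * e^2 * k0 * l1 * z)"])
     apply (simp only: matrix_matrix_mult_def trace_def mk2_simps vec_lambda_beta sum_2)
     apply algebra?
    by (fact ce)
  have tV1: "trace (pA J (CV C X) (b 1)) = (- 2 * e * k1 * z - 4 * e * k0 * x - 2 * c * k1 * y - 4 * a * k1 * x - 2 * a * k0 * y + 2 * a * e^2 * k0 * z + 2 * a^2 * e * k1 * z - 4 * a^2 * e * k0 * x + 2 * a^3 * e^2 * k0 * z)"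
    unfolding eV1
    apply (simp only: matrix_matrix_mult_def trace_def mk2_simps vec_lambda_beta sum_2)
    apply algebra?
    done
  have tV2: "trace (pA J (CV C X) (J *v b 1)) = (- 4 * k1 * x + 2 * k0 * y + 2 * e^2 * k0 * z + 4 * a * e * k1 * z + 2 * a^2 * e^2 * k0 * z)"
    unfolding eV2
    apply (simp only: matrix_matrix_mult_def trace_def mk2_simps vec_lambda_beta sum_2)
    apply algebra?
    done
  have tW1: "trace (- (pA J Cd (b 1) ** J) - (pA J C (b 1) ** Jd)) = (- 2 * e * k1 * ss - 2 * e * k0 * pp)"
    unfolding eW1
    apply (simp only: matrix_matrix_mult_def trace_def mk2_simps vec_lambda_beta sum_2)
    apply algebra?
    done
  have tW2: "trace (- (pA J Cd (J *v b 1) ** J) - (pA J C (J *v b 1) ** Jd)) = (- 2 * k1 * pp + 2 * e^2 * k0 * ss + 2 * a * e * k1 * ss - 2 * a * e * k0 * pp + 2 * a^2 * e^2 * k0 * ss)"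
    unfolding eW2
    apply (simp only: matrix_matrix_mult_def trace_def mk2_simps vec_lambda_beta sum_2)
    apply algebra?
    done
  show ?thesis
    unfolding ipA'_A0 ipA'_Atr tVW1 tVW2 tV1 tV2 tW1 tW2
    apply (rule cert_rule[where c=c and e=e and Q="(- 2 * e * k1^2 * ss * y + 1 * e * k0 * k1 * pp * y - 2 * e^2 * k1 * l1 * z + 2 * e^2 * k0 * l0 * y + 1 * e^3 * k1^2 * ss * z - 2 * e^3 * k0 * k1 * pp * z - 3 * e^3 * k0^2 * ss * y + 2 * c * e * k1 * l1 * y - 1 * c * e^2 * k1^2 * ss * y + 2 * c * e^2 * k0 * k1 * pp * y - 2 * c * e^3 * k1 * l1 * z + 3 * c * e^4 * k1^2 * ss * z + 2 * c^2 * e^2 * k1 * l1 * y - 3 * c^2 * e^3 * k1^2 * ss * y + 4 * a * e * k1 * l1 * x + 2 * a * e * k1 * l0 * y + 2 * a * e * k0 * l1 * y - 2 * a * e^2 * k1^2 * ss * x - 4 * a * e^2 * k0 * k1 * ss * y + 4 * a * e^2 * k0 * k1 * pp * x + 2 * a * e^2 * k0^2 * pp * y - 2 * a * e^3 * k1 * l0 * z - 2 * a * e^3 * k0 * l1 * z + 6 * a * e^4 * k0 * k1 * ss * z + 4 * a * c * e^2 * k1 * l1 * x + 2 * a * c * e^2 * k1 * l0 * y + 2 * a * c * e^2 * k0 * l1 * y - 6 * a * c * e^3 * k1^2 * ss * x - 6 * a * c * e^3 * k0 * k1 * ss * y - 2 * a^2 * e^2 * k1 * l1 * z + 4 * a^2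 * e^2 * k1 * l0 * x + 4 * a^2 * e^2 * k0 * l1 * x + 2 * a^2 * e^2 * k0 * l0 * y + 1 * a^2 * e^3 * k1^2 * ss * z - 12 * a^2 * e^3 * k0 * k1 * ss * x - 2 * a^2 * e^3 * k0 * k1 * pp * z - 3 * a^2 * e^3 * k0^2 * ss * y - 2 * a^2 * c * e^3 * k1 * l1 * z + 3 * a^2 * c * e^4 * k1^2 * ss * z - 2 * a^3 * e^3 * k1 * l0 * z - 2 * a^3 * e^3 * k0 * l1 * z + 6 * a^3 * e^4 * k0 * k1 * ss * z)"])
     apply (simp only: NdS_def matrix_matrix_mult_def trace_def vec_lambda_beta sum_2 J Jd X C Cd hb hq k2 k3 l2 l3 d1)
     apply algebra
    by (fact ce)
qed




lemma gJ_b11: "gJ J (b 1) (b 1) = J$2$1"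
  by (simp add: gJ_def rho_def matrix_vector_mult_def sum_2)

lemma trace_scale_mult: "trace ((r *\<^sub>R M) ** (r *\<^sub>R N)) = r * r * trace (M ** N)"
  by (simp add: trace_def matrix_matrix_mult_def sum_distrib_left algebra_simps)

lemma ipA_hom:
  assumes hA: "\<And>r Y. A (r *\<^sub>R Y) = r *\<^sub>R A Y" and hB: "\<And>r Y. B (r *\<^sub>R Y) = r *\<^sub>R B Y"
    and c: "J$2$1 > 0"
  shows "ipA J A B = ipA' J A B"
proof -
  define s where "s = 1 / sqrt (J$2$1)"
  have ss: "s * s = 1 / J$2$1" using c by (simp add: s_def)
  have E1: "e1 J = s *\<^sub>R b 1" by (simp add: e1_def gJ_b11 s_def)
  have E2: "e2 J = s *\<^sub>R (J *v b 1)" by (simp add: e2_def E1 matrix_vector_mult_scaleR)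
  show ?thesis
    unfolding ipA_def ipA'_def E1 E2 hA hB trace_scale_mult ss
    by (simp add: add_divide_distrib)
qed

lemma pA_hom: "pA J C (r *\<^sub>R Y) = r *\<^sub>R pA J C Y"
  by (simp add: pA_def CX_def vec_eq_iff sum_2 algebra_simps)

lemma pA_add: "pA J C (Y + Z) = pA J C Y + pA J C Z"
  by (simp add: pA_def CX_def vec_eq_iff sum_2 algebra_simps)

lemma A0_hom: "(\<And>r Y. A (r *\<^sub>R Y) = r *\<^sub>R A Y) \<Longrightarrow> A0 A (r *\<^sub>R Y) = r *\<^sub>R A0 A Y"
  by (simp add: A0_def Atr_def trace_def algebra_simps sum_2)

lemma Atr_hom: "(\<And>r Y. A (r *\<^sub>R Y) = r *\<^sub>R A Y) \<Longrightarrow> Atr A (r *\<^sub>R Y) = r *\<^sub>R Atr A Y"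
  by (simp add: Atr_def trace_def algebra_simps sum_2)

lemma W_hom: "(\<lambda>Y. - (pA J Cd Y ** Jd') - (pA J C Y ** Jd)) (r *\<^sub>R Y) = r *\<^sub>R (\<lambda>Y. - (pA J Cd Y ** Jd') - (pA J C Y ** Jd)) Y"
  by (simp add: pA_hom vec_eq_iff matrix_matrix_mult_def sum_2 algebra_simps)


lemma Nlem:
  fixes J :: mat2 and C :: ten3
  assumes J: "J$1$1 = a" "J$1$2 = bb" "J$2$1 = c" "J$2$2 = -a" and c: "c > 0" and ce: "c * e = 1"
    and hb: "bb = -(1+a^2) * e"
    and C: "C$1$1$1 = k0" "C$1$1$2 = k1" "C$1$2$1 = k1" "C$1$2$2 = k2" "C$2$1$1 = k1" "C$2$1$2 = k2" "C$2$2$1 = k2" "C$2$2$2 = k3"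
    and k2: "k2 = -(a^2 + 1) * k0 * e^2 - 2 * a * k1 * e"
    and k3: "k3 = (3 * a^2 - 1) * k1 * e^2 + (2 * a^3 + 2 * a) * k0 * e^3"
  shows "ipA' J (pA J C) (pA J C) = 4 * (k0^2 + (a*k0 + c*k1)^2) * e^3"
proof -
  have d1: "\<And>t. t / c = t * e"
    using ce c by (simp_all add: field_simps)
  show ?thesis
    apply (rule cert_rule[where c=c and e=e and Q="(3 * e^3 * k0^2 - 2 * c * e^2 * k1^2 + 3 * c * e^4 * k0^2 + 1 * c^2 * e^3 * k1^2 + 2 * c^2 * e^5 * k0^2 + 1 * c^3 * e^4 * k1^2 - 4 * a * e^2 * k0 * k1 + 6 * a * c * e^3 * k0 * k1 + 10 * a * c^2 * e^4 * k0 * k1 - 4 * a * c^3 * e^5 * k0 * k1 - 2 * a^2 * e * k1^2 + 3 * a^2 * e^3 * k0^2 - 2 * a^2 * c * e^2 * k1^2 + 7 * a^2 * c * e^4 * k0^2 + 14 * a^2 * c^2 * e^3 * k1^2 - 2 * a^2 * c^2 * e^5 * k0^2 - 6 * a^2 * c^3 * e^4 * k1^2 + 4 * a^2 * c^3 * e^6 * k0^2 - 4 * a^3 * e^2 * k0 * k1 + 16 * a^3 * c * e^3 * k0 * k1 - 12 * a^3 * c^2 * e^4 * k0 * k1 + 8 * a^3 * c^3 * e^5 * k0 * k1 - 2 * a^4 * e * k1^2 + 1 * a^4 * e^3 * k0^2 + 12 * a^4 * c * e^2 * k1^2 + 5 * a^4 * c * e^4 * k0^2 - 19 * a^4 * c^2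 * e^3 * k1^2 - 10 * a^4 * c^2 * e^5 * k0^2 + 9 * a^4 * c^3 * e^4 * k1^2 + 8 * a^4 * c^3 * e^6 * k0^2 + 10 * a^5 * c * e^3 * k0 * k1 - 22 * a^5 * c^2 * e^4 * k0 * k1 + 12 * a^5 * c^3 * e^5 * k0 * k1 + 1 * a^6 * e^3 * k0^2 + 1 * a^6 * c * e^4 * k0^2 - 6 * a^6 * c^2 * e^5 * k0^2 + 4 * a^6 * c^3 * e^6 * k0^2)"])
     apply (simp only: ipA'_def pA_def CX_def Kinv_simps vec_lambda_beta sum_2 b_simps matrix_matrix_mult_def matrix_vector_mult_def trace_def J C hb k2 k3 d1)
     apply algebra?
    by (fact ce)
qed

lemma trilin_b: "trilin C (b i) (b j) (b k) = C$i$j$k"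
  using exhaust_2[of i] exhaust_2[of j] exhaust_2[of k]
  by (auto simp: trilin_def sum_2)

lemma B0_facts:
  assumes "(J, C) \<in> B0"
  shows "J$2$2 = - J$1$1" "J$1$1 ^ 2 + J$1$2 * J$2$1 = -1" "J$2$1 > 0"
    "C$1$2$1 = C$1$1$2" "C$2$1$1 = C$1$1$2" "C$2$1$2 = C$1$2$2" "C$2$2$1 = C$1$2$2"
    "J$2$1 * C$1$2$2 = J$1$2 * C$1$1$1 - 2 * J$1$1 * C$1$1$2"
    "J$2$1 * C$2$2$2 = J$1$2 * C$1$1$2 - 2 * J$1$1 * C$1$2$2"
    "C \<noteq> 0"
proof -
  have JS: "J \<in> Jspace" and TS: "totally_symmetric C" and D: "\<forall>X Y Z. trilin C (J *v X) (J *v Y) (J *v Z) = - trilin C (J *v X) Y Z"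
    and C0: "C \<noteq> 0"
    using assms by (auto simp: B0_def D3_def)
  note jc = Jspace_char[OF JS]
  show "J$2$2 = - J$1$1" "J$1$1 ^ 2 + J$1$2 * J$2$1 = -1" "J$2$1 > 0" "C \<noteq> 0" using jc C0 by auto
  have s1: "\<And>X Y Z. trilin C X Y Z = trilin C Y X Z" "\<And>X Y Z. trilin C X Y Z = trilin C X Z Y"
    using TS by (auto simp: totally_symmetric_def)
  show c121: "C$1$2$1 = C$1$1$2" using s1(2)[of "b 1" "b 1" "b 2"] by (simp add: trilin_b)
  show c211: "C$2$1$1 = C$1$1$2" using s1(1)[of "b 1" "b 2" "b 1"] c121 by (simp add: trilin_b)
  show c212: "C$2$1$2 = C$1$2$2" using s1(1)[of "b 1" "b 2" "b 2"] by (simp add: trilin_b)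
  show c221: "C$2$2$1 = C$1$2$2" using s1(2)[of "b 2" "b 1" "b 2"] c212 by (simp add: trilin_b)
  have H1: "trilin C (J *v b 1) (J *v b 1) (J *v b 1) = - trilin C (J *v b 1) (b 1) (b 1)" using D by blast
  have H2: "trilin C (J *v b 2) (J *v b 1) (J *v b 1) = - trilin C (J *v b 2) (b 1) (b 1)" using D by blast
  define a where "a = J$1$1"
  define bb where "bb = J$1$2"
  define c where "c = J$2$1"
  define k0 where "k0 = C$1$1$1"
  define k1 where "k1 = C$1$1$2"
  define k2 where "k2 = C$1$2$2"
  define k3 where "k3 = C$2$2$2"
  have Je: "J$1$1 = a" "J$1$2 = bb" "J$2$1 = c" "J$2$2 = -a" using jc by (auto simp: a_def bb_def c_def)
  have Ce: "C$1$1$1 = k0" "C$1$1$2 = k1" "C$1$2$1 = k1" "C$1$2$2 = k2" "C$2$1$1 = k1" "C$2$1$2 = k2" "C$2$2$1 = k2" "C$2$2$2 = k3"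
    using c121 c211 c212 c221 by (auto simp: k0_def k1_def k2_def k3_def)
  have hj: "a^2 + bb * c = -1" using jc by (simp add: a_def bb_def c_def)
  have cpos: "c > 0" using jc by (simp add: c_def)
  have h1: "trilin C (J *v b 1) (J *v b 1) (J *v b 1) + trilin C (J *v b 1) (b 1) (b 1) = 0" using H1 by simp
  have h2: "trilin C (J *v b 2) (J *v b 1) (J *v b 1) + trilin C (J *v b 2) (b 1) (b 1) = 0" using H2 by simp
  have h1': "a * (c * k2 - bb * k0 + 2 * a * k1) + c * (c * k3 - bb * k1 + 2 * a * k2) = 0"
  proof -
    have "c * (a * (c * k2 - bb * k0 + 2 * a * k1) + c * (c * k3 - bb * k1 + 2 * a * k2)) = 0"
      using h1 hj unfolding trilin_def by (simp add: sum_2 matrix_vector_mult_def Je Ce) algebra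
    then show ?thesis using cpos by simp
  qed
  have h2': "bb * (c * k2 - bb * k0 + 2 * a * k1) - a * (c * k3 - bb * k1 + 2 * a * k2) = 0"
  proof -
    have "c * (bb * (c * k2 - bb * k0 + 2 * a * k1) - a * (c * k3 - bb * k1 + 2 * a * k2)) = 0"
      using h2 hj unfolding trilin_def by (simp add: sum_2 matrix_vector_mult_def Je Ce) algebra
    then show ?thesis using cpos by simp
  qed
  have L1: "c * k2 - bb * k0 + 2 * a * k1 = 0" using h1' h2' hj by algebra
  have L2: "c * k3 - bb * k1 + 2 * a * k2 = 0" using h1' h2' hj by algebra
  show "J$2$1 * C$1$2$2 = J$1$2 * C$1$1$1 - 2 * J$1$1 * C$1$1$2" using L1 by (simp add: Je Ce)
  show "J$2$1 * C$2$2$2 = J$1$2 * C$1$1$2 - 2 * J$1$1 * C$1$2$2" using L2 by (simp add: Je Ce)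
qed


definition Nform :: "mat2 \<Rightarrow> ten3 \<Rightarrow> real" where
  "Nform J C = ((C$1$1$1)^2 + (J$1$1 * C$1$1$1 + J$2$1 * C$1$1$2)^2) / (J$2$1)^3"

lemma B0_eforms:
  assumes "(J, C) \<in> B0" and e: "e = 1 / J$2$1"
  shows "J$2$1 * e = 1" "J$1$2 = -(1 + (J$1$1)^2) * e"
    "C$1$2$2 = -((J$1$1)^2 + 1) * C$1$1$1 * e^2 - 2 * J$1$1 * C$1$1$2 * e"
    "C$2$2$2 = (3 * (J$1$1)^2 - 1) * C$1$1$2 * e^2 + (2 * (J$1$1)^3 + 2 * J$1$1) * C$1$1$1 * e^3"
    "J$1$1 * J$2$2 - J$1$2 * J$2$1 = 1"
proof -
  note f = B0_facts[OF assms(1)]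
  show ce: "J$2$1 * e = 1" using f(3) e by simp
  show hb: "J$1$2 = -(1 + (J$1$1)^2) * e"
  proof -
    have "J$1$2 = J$1$2 * (J$2$1 * e)" using ce by simp
    also have "\<dots> = -(1 + (J$1$1)^2) * e" using f(2) by algebra
    finally show ?thesis .
  qed
  show k2: "C$1$2$2 = -((J$1$1)^2 + 1) * C$1$1$1 * e^2 - 2 * J$1$1 * C$1$1$2 * e"
  proof -
    have "C$1$2$2 = (J$2$1 * C$1$2$2) * e" using ce by (simp add: algebra_simps)
    also have "\<dots> = -((J$1$1)^2 + 1) * C$1$1$1 * e^2 - 2 * J$1$1 * C$1$1$2 * e"
      unfolding f(8) hb by (simp add: algebra_simps power2_eq_square)
    finally show ?thesis .
  qed
  show "C$2$2$2 = (3 * (J$1$1)^2 - 1) * C$1$1$2 * e^2 + (2 * (J$1$1)^3 + 2 * J$1$1) * C$1$1$1 * e^3"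
  proof -
    have "C$2$2$2 = (J$2$1 * C$2$2$2) * e" using ce by (simp add: algebra_simps)
    also have "\<dots> = (3 * (J$1$1)^2 - 1) * C$1$1$2 * e^2 + (2 * (J$1$1)^3 + 2 * J$1$1) * C$1$1$1 * e^3"
      unfolding f(9) hb k2 by (simp add: algebra_simps power2_eq_square power3_eq_cube)
    finally show ?thesis .
  qed
  show "J$1$1 * J$2$2 - J$1$2 * J$2$1 = 1" using f(1,2) by (simp add: power2_eq_square)
qed

lemma N_B0:
  assumes "(J, C) \<in> B0"
  shows "norm0sq J (pickA J C) = Nform J C"
proof -
  define e where "e = 1 / J$2$1"
  note f = B0_facts[OF assms] and g = B0_eforms[OF assms e_def]
  have pk: "pickA J C = pA J C" by (rule ext, rule pickA_eq[OF g(5)])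
  have "norm0sq J (pickA J C) = ipA' J (pA J C) (pA J C) / 4"
    unfolding norm0sq_def pk by (simp add: ipA_hom[OF pA_hom pA_hom f(3)])
  also have "ipA' J (pA J C) (pA J C) = 4 * ((C$1$1$1)^2 + (J$1$1 * C$1$1$1 + J$2$1 * C$1$1$2)^2) * e^3"
    by (rule Nlem[where a="J$1$1" and bb="J$1$2" and c="J$2$1" and ?k0.0="C$1$1$1" and ?k1.0="C$1$1$2" and ?k2.0="C$1$2$2" and ?k3.0="C$2$2$2"])
       (use f g in auto)
  finally show ?thesis unfolding Nform_def e_def using f(3) by (simp add: field_simps)
qed

lemma Nform_pos:
  assumes "(J, C) \<in> B0"
  shows "Nform J C > 0"
proof -
  define e where "e = 1 / J$2$1"
  note f = B0_facts[OF assms] and g = B0_eforms[OF assms e_def]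
  have num: "(C$1$1$1)^2 + (J$1$1 * C$1$1$1 + J$2$1 * C$1$1$2)^2 > 0"
  proof (rule ccontr)
    assume "\<not> ?thesis"
    then have "(C$1$1$1)^2 + (J$1$1 * C$1$1$1 + J$2$1 * C$1$1$2)^2 = 0"
      by (smt (verit) zero_le_power2)
    then have z0: "C$1$1$1 = 0" and "J$1$1 * C$1$1$1 + J$2$1 * C$1$1$2 = 0"
      by (smt (verit) zero_le_power2 power_zero_numeral zero_eq_power2)+
    then have z1: "C$1$1$2 = 0" using f(3) by simp
    have z2: "C$1$2$2 = 0" using g(3) z0 z1 by simp
    have z3: "C$2$2$2 = 0" using g(4) z0 z1 by simp
    have "C = 0"
      unfolding vec_eq_iff forall_2 using z0 z1 z2 z3 f(4-7) by simp
    then show False using f(10) by simp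
  qed
  then show ?thesis unfolding Nform_def using f(3) by simp
qed


lemma Glem:
  fixes J :: mat2 and C :: ten3 and w :: "real^2"
  assumes J: "J$1$1 = a" "J$1$2 = bb" "J$2$1 = c" "J$2$2 = -a" and ce: "c * e = 1"
    and hb: "bb = -(1+a^2) * e"
    and C: "C$1$1$1 = k0" "C$1$1$2 = k1" "C$1$2$1 = k1" "C$1$2$2 = k2" "C$2$1$1 = k1" "C$2$1$2 = k2" "C$2$2$1 = k2" "C$2$2$2 = k3"
    and k2: "k2 = -(a^2 + 1) * k0 * e^2 - 2 * a * k1 * e"
    and k3: "k3 = (3 * a^2 - 1) * k1 * e^2 + (2 * a^3 + 2 * a) * k0 * e^3"
    and w: "w$1 = w1" "w$2 = w2"
  shows "(trilin C w w w)^2 + (trilin C (J *v w) (J *v w) (J *v w))^2 = (k0^2 + (a*k0 + c*k1)^2) * e^3 * (rho w (J *v w))^3"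
  apply (rule cert_rule[where c=c and e=e and Q="(- 9 * k1^2 * w1^4 * w2^2 - 6 * k0 * k1 * w1^5 * w2 - 1 * k0^2 * w1^6 + 6 * e^2 * k1^2 * w1^2 * w2^4 + 20 * e^2 * k0 * k1 * w1^3 * w2^3 + 6 * e^2 * k0^2 * w1^4 * w2^2 - 1 * e^4 * k1^2 * w2^6 - 6 * e^4 * k0 * k1 * w1 * w2^5 - 9 * e^4 * k0^2 * w1^2 * w2^4 - 9 * c * e * k1^2 * w1^4 * w2^2 - 6 * c * e * k0 * k1 * w1^5 * w2 - 1 * c * e * k0^2 * w1^6 + 6 * c * e^3 * k1^2 * w1^2 * w2^4 + 20 * c * e^3 * k0 * k1 * w1^3 * w2^3 + 6 * c * e^3 * k0^2 * w1^4 * w2^2 - 1 * c * e^5 * k1^2 * w2^6 - 6 * c * e^5 * k0^2 * w1^2 * w2^4 - 9 * c^2 * e^2 * k1^2 * w1^4 * w2^2 - 6 * c^2 * e^2 * k0 * k1 * w1^5 * w2 - 1 * c^2 * e^2 * k0^2 * w1^6 - 3 * c^2 * e^4 * k1^2 * w1^2 * w2^4 + 20 * c^2 * e^4 * k0 * k1 * w1^3 * w2^3 + 9 * c^2 * e^4 * k0^2 * w1^4 * w2^2 - 9 * c^3 * e^3 * k1^2 * w1^4 * w2^2 - 6 * c^3 * e^3 * k0 * k1 * w1^5 * w2 + 9 * c^3 * e^5 * k0^2 * w1^4 * w2^2 - 6 * c^4 * e^4 * k0 * k1 * w1^5 * w2 + 1 * c^5 * e^3 * k1^2 * w1^6 +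 36 * a * e * k1^2 * w1^3 * w2^3 + 12 * a * e * k0 * k1 * w1^4 * w2^2 - 12 * a * e^3 * k1^2 * w1 * w2^5 - 48 * a * e^3 * k0 * k1 * w1^2 * w2^4 - 4 * a * e^3 * k0^2 * w1^3 * w2^3 - 2 * a * e^5 * k0 * k1 * w2^6 + 12 * a * e^5 * k0^2 * w1 * w2^5 + 36 * a * c * e^2 * k1^2 * w1^3 * w2^3 + 12 * a * c * e^2 * k0 * k1 * w1^4 * w2^2 + 6 * a * c * e^4 * k1^2 * w1 * w2^5 - 78 * a * c * e^4 * k0 * k1 * w1^2 * w2^4 - 16 * a * c * e^4 * k0^2 * w1^3 * w2^3 + 72 * a * c^2 * e^3 * k1^2 * w1^3 * w2^3 + 12 * a * c^2 * e^3 * k0 * k1 * w1^4 * w2^2 - 6 * a * c^2 * e^3 * k0^2 * w1^5 * w2 - 40 * a * c^2 * e^5 * k0^2 * w1^3 * w2^3 + 78 * a * c^3 * e^4 * k0 * k1 * w1^4 * w2^2 - 6 * a * c^3 * e^4 * k0^2 * w1^5 * w2 - 18 * a * c^4 * e^3 * k1^2 * w1^5 * w2 + 2 * a * c^4 * e^3 * k0 * k1 * w1^6 + 12 * a * c^4 * e^5 * k0^2 * w1^5 * w2 - 4 * a * c^5 * e^4 * k0 * k1 * w1^6 - 54 * a^2 * e^2 * k1^2 * w1^2 * w2^4 + 12 * a^2 * e^2 * k0 * k1 * w1^3 * w2^3 + 6 * a^2 * e^2 * k0^2 * w1^4 * w2^2 - 3 * a^2 * e^4 * k1^2 * w2^6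 + 66 * a^2 * e^4 * k0 * k1 * w1 * w2^5 - 21 * a^2 * e^4 * k0^2 * w1^2 * w2^4 - 126 * a^2 * c * e^3 * k1^2 * w1^2 * w2^4 + 72 * a^2 * c * e^3 * k0 * k1 * w1^3 * w2^3 + 18 * a^2 * c * e^3 * k0^2 * w1^4 * w2^2 - 3 * a^2 * c * e^5 * k1^2 * w2^6 + 36 * a^2 * c * e^5 * k0^2 * w1^2 * w2^4 - 54 * a^2 * c^2 * e^2 * k1^2 * w1^4 * w2^2 - 6 * a^2 * c^2 * e^4 * k1^2 * w1^2 * w2^4 - 180 * a^2 * c^2 * e^4 * k0 * k1 * w1^3 * w2^3 + 60 * a^2 * c^2 * e^4 * k0^2 * w1^4 * w2^2 + 114 * a^2 * c^3 * e^3 * k1^2 * w1^4 * w2^2 - 72 * a^2 * c^3 * e^3 * k0 * k1 * w1^5 * w2 + 1 * a^2 * c^3 * e^3 * k0^2 * w1^6 - 24 * a^2 * c^3 * e^5 * k0^2 * w1^4 * w2^2 + 6 * a^2 * c^4 * e^2 * k1^2 * w1^6 + 54 * a^2 * c^4 * e^4 * k0 * k1 * w1^5 * w2 - 8 * a^2 * c^4 * e^4 * k0^2 * w1^6 - 6 * a^2 * c^5 * e^3 * k1^2 * w1^6 + 4 * a^2 * c^5 * e^5 * k0^2 * w1^6 + 72 * a^3 * e^3 * k1^2 * w1 * w2^5 - 108 * a^3 * e^3 * k0 * k1 * w1^2 * w2^4 + 8 * a^3 * e^3 * k0^2 * w1^3 * w2^3 - 6 * a^3 * e^5 * k0 * k1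 * w2^6 + 12 * a^3 * e^5 * k0^2 * w1 * w2^5 + 108 * a^3 * c * e^2 * k1^2 * w1^3 * w2^3 - 60 * a^3 * c * e^2 * k0 * k1 * w1^4 * w2^2 + 12 * a^3 * c * e^4 * k1^2 * w1 * w2^5 + 72 * a^3 * c * e^4 * k0 * k1 * w1^2 * w2^4 - 88 * a^3 * c * e^4 * k0^2 * w1^3 * w2^3 + 36 * a^3 * c^2 * e * k1^2 * w1^5 * w2 - 188 * a^3 * c^2 * e^3 * k1^2 * w1^3 * w2^3 + 216 * a^3 * c^2 * e^3 * k0 * k1 * w1^4 * w2^2 - 30 * a^3 * c^2 * e^3 * k0^2 * w1^5 * w2 - 40 * a^3 * c^2 * e^5 * k0^2 * w1^3 * w2^3 - 96 * a^3 * c^3 * e^2 * k1^2 * w1^5 * w2 + 20 * a^3 * c^3 * e^2 * k0 * k1 * w1^6 - 66 * a^3 * c^3 * e^4 * k0 * k1 * w1^4 * w2^2 + 18 * a^3 * c^3 * e^4 * k0^2 * w1^5 * w2 + 60 * a^3 * c^4 * e^3 * k1^2 * w1^5 * w2 - 28 * a^3 * c^4 * e^3 * k0 * k1 * w1^6 + 12 * a^3 * c^4 * e^5 * k0^2 * w1^5 * w2 + 8 * a^3 * c^5 * e^4 * k0 * k1 * w1^6 - 54 * a^4 * e^2 * k1^2 * w1^2 * w2^4 + 60 * a^4 * e^2 * k0 * k1 * w1^3 * w2^3 - 15 * a^4 * e^2 * k0^2 * w1^4 * w2^2 - 3 * a^4 * e^4 * k1^2 * w2^6 + 54 * a^4 *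 e^4 * k0 * k1 * w1 * w2^5 - 9 * a^4 * e^4 * k0^2 * w1^2 * w2^4 - 72 * a^4 * c * e * k1^2 * w1^4 * w2^2 + 30 * a^4 * c * e * k0 * k1 * w1^5 * w2 + 102 * a^4 * c * e^3 * k1^2 * w1^2 * w2^4 - 100 * a^4 * c * e^3 * k0 * k1 * w1^3 * w2^3 + 45 * a^4 * c * e^3 * k0^2 * w1^4 * w2^2 - 3 * a^4 * c * e^5 * k1^2 * w2^6 + 84 * a^4 * c * e^5 * k0^2 * w1^2 * w2^4 - 9 * a^4 * c^2 * k1^2 * w1^6 + 180 * a^4 * c^2 * e^2 * k1^2 * w1^4 * w2^2 - 78 * a^4 * c^2 * e^2 * k0 * k1 * w1^5 * w2 + 6 * a^4 * c^2 * e^2 * k0^2 * w1^6 - 3 * a^4 * c^2 * e^4 * k1^2 * w1^2 * w2^4 - 100 * a^4 * c^2 * e^4 * k0 * k1 * w1^3 * w2^3 + 66 * a^4 * c^2 * e^4 * k0^2 * w1^4 * w2^2 + 27 * a^4 * c^3 * e * k1^2 * w1^6 - 108 * a^4 * c^3 * e^3 * k1^2 * w1^4 * w2^2 + 18 * a^4 * c^3 * e^3 * k0 * k1 * w1^5 * w2 + 2 * a^4 * c^3 * e^3 * k0^2 * w1^6 - 66 * a^4 * c^3 * e^5 * k0^2 * w1^4 * w2^2 - 27 * a^4 * c^4 * e^2 * k1^2 * w1^6 + 30 * a^4 * c^4 * e^4 * k0 * k1 * w1^5 * w2 - 16 * a^4 * c^4 * e^4 * k0^2 * w1^6 + 9 *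 a^4 * c^5 * e^3 * k1^2 * w1^6 + 8 * a^4 * c^5 * e^5 * k0^2 * w1^6 + 36 * a^5 * e * k1^2 * w1^3 * w2^3 - 30 * a^5 * e * k0 * k1 * w1^4 * w2^2 + 6 * a^5 * e * k0^2 * w1^5 * w2 - 12 * a^5 * e^3 * k1^2 * w1 * w2^5 - 48 * a^5 * e^3 * k0 * k1 * w1^2 * w2^4 + 28 * a^5 * e^3 * k0^2 * w1^3 * w2^3 - 6 * a^5 * e^5 * k0 * k1 * w2^6 - 12 * a^5 * e^5 * k0^2 * w1 * w2^5 + 18 * a^5 * c * k1^2 * w1^5 * w2 - 6 * a^5 * c * k0 * k1 * w1^6 - 96 * a^5 * c * e^2 * k1^2 * w1^3 * w2^3 + 6 * a^5 * c * e^2 * k0 * k1 * w1^4 * w2^2 - 6 * a^5 * c * e^2 * k0^2 * w1^5 * w2 + 6 * a^5 * c * e^4 * k1^2 * w1 * w2^5 + 138 * a^5 * c * e^4 * k0 * k1 * w1^2 * w2^4 - 128 * a^5 * c * e^4 * k0^2 * w1^3 * w2^3 - 54 * a^5 * c^2 * e * k1^2 * w1^5 * w2 + 6 * a^5 * c^2 * e * k0 * k1 * w1^6 + 60 * a^5 * c^2 * e^3 * k1^2 * w1^3 * w2^3 + 150 * a^5 * c^2 * e^3 * k0 * k1 * w1^4 * w2^2 - 42 * a^5 * c^2 * e^3 * k0^2 * w1^5 * w2 + 40 * a^5 * c^2 * e^5 * k0^2 * w1^3 * w2^3 + 54 * a^5 * c^3 * e^2 * k1^2 * w1^5 * w2 +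 18 * a^5 * c^3 * e^2 * k0 * k1 * w1^6 - 126 * a^5 * c^3 * e^4 * k0 * k1 * w1^4 * w2^2 + 54 * a^5 * c^3 * e^4 * k0^2 * w1^5 * w2 - 18 * a^5 * c^4 * e^3 * k1^2 * w1^5 * w2 - 30 * a^5 * c^4 * e^3 * k0 * k1 * w1^6 - 12 * a^5 * c^4 * e^5 * k0^2 * w1^5 * w2 + 12 * a^5 * c^5 * e^4 * k0 * k1 * w1^6 - 9 * a^6 * k1^2 * w1^4 * w2^2 + 6 * a^6 * k0 * k1 * w1^5 * w2 - 1 * a^6 * k0^2 * w1^6 + 6 * a^6 * e^2 * k1^2 * w1^2 * w2^4 + 52 * a^6 * e^2 * k0 * k1 * w1^3 * w2^3 - 24 * a^6 * e^2 * k0^2 * w1^4 * w2^2 - 1 * a^6 * e^4 * k1^2 * w2^6 - 18 * a^6 * e^4 * k0 * k1 * w1 * w2^5 + 9 * a^6 * e^4 * k0^2 * w1^2 * w2^4 + 27 * a^6 * c * e * k1^2 * w1^4 * w2^2 + 12 * a^6 * c * e * k0 * k1 * w1^5 * w2 - 1 * a^6 * c * e * k0^2 * w1^6 - 6 * a^6 * c * e^3 * k1^2 * w1^2 * w2^4 - 152 * a^6 * c * e^3 * k0 * k1 * w1^3 * w2^3 + 60 * a^6 * c * e^3 * k0^2 * w1^4 * w2^2 - 1 * a^6 * c * e^5 * k1^2 * w2^6 + 36 * a^6 * c * e^5 * k0^2 * w1^2 * w2^4 - 27 * a^6 * c^2 * e^2 * k1^2 * w1^4 * w2^2 - 72 *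 a^6 * c^2 * e^2 * k0 * k1 * w1^5 * w2 + 5 * a^6 * c^2 * e^2 * k0^2 * w1^6 + 100 * a^6 * c^2 * e^4 * k0 * k1 * w1^3 * w2^3 - 12 * a^6 * c^2 * e^4 * k0^2 * w1^4 * w2^2 + 9 * a^6 * c^3 * e^3 * k1^2 * w1^4 * w2^2 + 84 * a^6 * c^3 * e^3 * k0 * k1 * w1^5 * w2 + 1 * a^6 * c^3 * e^3 * k0^2 * w1^6 - 24 * a^6 * c^3 * e^5 * k0^2 * w1^4 * w2^2 - 30 * a^6 * c^4 * e^4 * k0 * k1 * w1^5 * w2 - 8 * a^6 * c^4 * e^4 * k0^2 * w1^6 + 4 * a^6 * c^5 * e^5 * k0^2 * w1^6 - 18 * a^7 * e * k0 * k1 * w1^4 * w2^2 + 6 * a^7 * e * k0^2 * w1^5 * w2 + 12 * a^7 * e^3 * k0 * k1 * w1^2 * w2^4 + 16 * a^7 * e^3 * k0^2 * w1^3 * w2^3 - 2 * a^7 * e^5 * k0 * k1 * w2^6 - 12 * a^7 * e^5 * k0^2 * w1 * w2^5 + 54 * a^7 * c * e^2 * k0 * k1 * w1^4 * w2^2 - 6 * a^7 * c * e^2 * k0^2 * w1^5 * w2 - 12 * a^7 * c * e^4 * k0 * k1 * w1^2 * w2^4 - 56 * a^7 * c * e^4 * k0^2 * w1^3 * w2^3 - 54 * a^7 * c^2 * e^3 * k0 * k1 * w1^4 * w2^2 - 18 * a^7 * c^2 * e^3 * k0^2 * w1^5 * w2 + 40 * a^7 * c^2 * e^5 * k0^2 *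 w1^3 * w2^3 + 18 * a^7 * c^3 * e^4 * k0 * k1 * w1^4 * w2^2 + 30 * a^7 * c^3 * e^4 * k0^2 * w1^5 * w2 - 12 * a^7 * c^4 * e^5 * k0^2 * w1^5 * w2 - 9 * a^8 * e^2 * k0^2 * w1^4 * w2^2 + 6 * a^8 * e^4 * k0^2 * w1^2 * w2^4 + 27 * a^8 * c * e^3 * k0^2 * w1^4 * w2^2 - 6 * a^8 * c * e^5 * k0^2 * w1^2 * w2^4 - 27 * a^8 * c^2 * e^4 * k0^2 * w1^4 * w2^2 + 9 * a^8 * c^3 * e^5 * k0^2 * w1^4 * w2^2)"])
   apply (simp only: trilin_def rho_def vec_lambda_beta sum_2 matrix_vector_mult_def J C hb k2 k3 w power2_eq_square power3_eq_cube)
   apply algebra?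
  by (fact ce)

lemma Gen:
  assumes "(J, C) \<in> B0"
  shows "(trilin C w w w)^2 + (trilin C (J *v w) (J *v w) (J *v w))^2 = Nform J C * (rho w (J *v w))^3"
proof -
  define e where "e = 1 / J$2$1"
  note f = B0_facts[OF assms] and g = B0_eforms[OF assms e_def]
  have "(trilin C w w w)^2 + (trilin C (J *v w) (J *v w) (J *v w))^2 = ((C$1$1$1)^2 + (J$1$1 * C$1$1$1 + J$2$1 * C$1$1$2)^2) * e^3 * (rho w (J *v w))^3"
    by (rule Glem[where a="J$1$1" and bb="J$1$2" and c="J$2$1" and ?k0.0="C$1$1$1" and ?k1.0="C$1$1$2" and ?k2.0="C$1$2$2" and ?k3.0="C$2$2$2" and ?w1.0="w$1" and ?w2.0="w$2"])
       (use f g in auto)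
  then show ?thesis unfolding Nform_def e_def by (simp add: field_simps)
qed

lemma matrix_inv_eq:
  fixes P Q :: mat2
  assumes "P ** Q = mat 1" "Q ** P = mat 1"
  shows "matrix_inv P = Q"
proof -
  have ex: "\<exists>M. P ** M = mat 1 \<and> M ** P = mat 1" using assms by blast
  have M: "P ** matrix_inv P = mat 1 \<and> matrix_inv P ** P = mat 1"
    unfolding matrix_inv_def by (rule someI_ex[OF ex])
  have "matrix_inv P = matrix_inv P ** (P ** Q)" using assms by (simp add: matrix_mul_rid)
  also have "\<dots> = (matrix_inv P ** P) ** Q" by (simp add: matrix_mul_assoc)
  also have "\<dots> = Q" using M by (simp add: matrix_mul_lid)
  finally show ?thesis .
qed

definition adj2 :: "mat2 \<Rightarrow> mat2" where
  "adj2 P = mk2 (P$2$2) (- P$1$2) (- P$2$1) (P$1$1)"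

lemma inv_adj2:
  fixes P :: mat2
  assumes "det P \<noteq> 0"
  shows "matrix_inv P = (1 / det P) *\<^sub>R adj2 P"
proof (rule matrix_inv_eq)
  have d: "P$1$1 * P$2$2 - P$1$2 * P$2$1 \<noteq> 0" using assms by (simp add: det_2)
  show "P ** ((1 / det P) *\<^sub>R adj2 P) = mat 1"
    using assms apply (simp add: vec_eq_iff forall_2 matrix_matrix_mult_def sum_2 adj2_def mk2_simps mat_def field_simps)
    by (simp_all add: det_2 algebra_simps)
  then show "((1 / det P) *\<^sub>R adj2 P) ** P = mat 1"
    using matrix_left_right_inverse by blast
qed

lemma rho_P: "rho (P *v u) (P *v w) = det P * rho u w"
  by (simp add: rho_def matrix_vector_mult_def sum_2 det_2 algebra_simps)

lemma act_formula:
  assumes "J$1$1 * J$2$2 - J$1$2 * J$2$1 = 1"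
  shows "act P (J, C) = (P ** J ** matrix_inv P,
     \<chi> i j k. det P * trilin C (matrix_inv P *v b i) (matrix_inv P *v b j) (matrix_inv P *v b k))"
proof -
  have pk: "pickA J C = pA J C" by (rule ext, rule pickA_eq[OF assms])
  define Pi where "Pi = matrix_inv P"
  have "gJ (P ** J ** Pi) ((P ** pA J C (Pi *v b i) ** Pi) *v b j) (b k) =
        det P * trilin C (Pi *v b i) (Pi *v b j) (Pi *v b k)" for i j k
  proof -
    have "gJ (P ** J ** Pi) ((P ** pA J C (Pi *v b i) ** Pi) *v b j) (b k)
        = rho (P *v (pA J C (Pi *v b i) *v (Pi *v b j))) (P *v (J *v (Pi *v b k)))"
      unfolding gJ_def by (simp add: matrix_vector_mul_assoc[symmetric])
    also have "\<dots> = det P * gJ J (pA J C (Pi *v b i) *v (Pi *v b j)) (Pi *v b k)"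
      unfolding rho_P gJ_def ..
    also have "\<dots> = det P * trilin C (Pi *v b i) (Pi *v b j) (Pi *v b k)"
      unfolding pA_prop assms by simp
    finally show ?thesis .
  qed
  from this[unfolded Pi_def] show ?thesis by (simp add: act_def Let_def pk)
qed

definition tpull :: "ten3 \<Rightarrow> mat2 \<Rightarrow> ten3" where
  "tpull C Q = (\<chi> i j k. trilin C (Q *v b i) (Q *v b j) (Q *v b k))"

lemma trilin_tpull: "trilin (tpull C Q) X Y Z = trilin C (Q *v X) (Q *v Y) (Q *v Z)"
  unfolding tpull_def trilin_def
  by (simp add: sum_2 matrix_vector_mult_def) algebra


lemma mu_B0:
  assumes "(J, C) \<in> B0"
  shows "mu f (J, C) X = (1 - f (Nform J C)) * trace (J ** X)"
  unfolding mu_def Let_def using N_B0[OF assms] by simp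

lemma part1:
  assumes P: "P \<in> SL2" and p: "p \<in> B0"
  shows "act P p \<in> B0 \<and> (\<forall>X \<in> sl2. mu f (act P p) X = mu f p (matrix_inv P ** X ** P))"
proof -
  obtain J C where pJC: "p = (J, C)" by (cases p)
  have B: "(J, C) \<in> B0" using p pJC by simp
  note f = B0_facts[OF B]
  have detJ: "J$1$1 * J$2$2 - J$1$2 * J$2$1 = 1" using f(1,2) by (simp add: power2_eq_square)
  have dP: "det P = 1" using P by (simp add: SL2_def)
  define Pi where "Pi = adj2 P"
  have Pinv: "matrix_inv P = Pi" unfolding Pi_def using inv_adj2[of P] dP by simp
  have PPi: "P ** Pi = mat 1"
    using dP unfolding Pi_def by (simp add: vec_eq_iff forall_2 matrix_matrix_mult_def sum_2 adj2_def mk2_simps mat_def det_2 algebra_simps)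
  then have PiP: "Pi ** P = mat 1" using matrix_left_right_inverse by blast
  have PiPv: "Pi *v (P *v y) = y" for y using PiP by (simp add: matrix_vector_mul_assoc)
  have PPiv: "P *v (Pi *v y) = y" for y using PPi by (simp add: matrix_vector_mul_assoc)
  define J' where "J' = P ** J ** Pi"
  define C' where "C' = tpull C Pi"
  have J'v: "J' *v y = P *v (J *v (Pi *v y))" for y unfolding J'_def by (simp add: matrix_vector_mul_assoc[symmetric])
  have PiJ': "Pi *v (J' *v y) = J *v (Pi *v y)" for y unfolding J'v PiPv ..
  have act: "act P p = (J', C')"
    unfolding pJC act_formula[OF detJ] Pinv dP J'_def C'_def tpull_def by simp
  have JS: "J \<in> Jspace" and TS: "totally_symmetric C"
    and D: "\<forall>X Y Z. trilin C (J *v X) (J *v Y) (J *v Z) = - trilin C (J *v X) Y Z"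
    using B by (auto simp: B0_def D3_def)
  have JJ: "J ** J = - mat 1" using JS by (simp add: Jspace_def)
  have JJe: "J$1$1 * J$1$1 + J$1$2 * J$2$1 = -1" "J$1$1 * J$1$2 + J$1$2 * J$2$2 = 0"
     "J$2$1 * J$1$1 + J$2$2 * J$2$1 = 0" "J$2$1 * J$1$2 + J$2$2 * J$2$2 = -1"
    using arg_cong[OF JJ, of "\<lambda>M. M$1$1"] arg_cong[OF JJ, of "\<lambda>M. M$1$2"]
      arg_cong[OF JJ, of "\<lambda>M. M$2$1"] arg_cong[OF JJ, of "\<lambda>M. M$2$2"]
    by (simp_all add: matrix_matrix_mult_def sum_2 mat_def)
  have J'J': "J' ** J' = - mat 1"
  proof -
    have "J' ** J' = P ** J ** (Pi ** P) ** J ** Pi" unfolding J'_def by (simp add: matrix_mul_assoc)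
    also have "\<dots> = P ** (J ** J) ** Pi" unfolding PiP by (simp add: matrix_mul_assoc matrix_mul_rid)
    also have "\<dots> = - (P ** Pi)" unfolding JJ
      by (simp add: vec_eq_iff forall_2 matrix_matrix_mult_def sum_2 mat_def algebra_simps)
    finally show ?thesis unfolding PPi .
  qed
  obtain v where v: "v \<noteq> 0" "rho v (J *v v) > 0" using JS by (auto simp: Jspace_def)
  have J'S: "J' \<in> Jspace"
    unfolding Jspace_def
  proof (intro CollectI conjI exI)
    show "J' ** J' = - mat 1" by (fact J'J')
    show "P *v v \<noteq> 0" using v(1) PiPv[of v] by auto
    show "rho (P *v v) (J' *v (P *v v)) > 0" unfolding J'v PiPv rho_P dP using v(2) by simp
  qed
  have TS': "totally_symmetric C'"
    using TS unfolding totally_symmetric_def C'_def trilin_tpull by metis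
  have D': "\<forall>X Y Z. trilin C' (J' *v X) (J' *v Y) (J' *v Z) = - trilin C' (J' *v X) Y Z"
    unfolding C'_def trilin_tpull PiJ' using D by simp
  have C'0: "C' \<noteq> 0"
  proof
    assume "C' = 0"
    then have "trilin C' (P *v b i) (P *v b j) (P *v b k) = 0" for i j k by (simp add: trilin_def)
    then have "C$i$j$k = 0" for i j k unfolding C'_def trilin_tpull PiPv trilin_b .
    then have "C = 0" by (simp add: vec_eq_iff)
    then show False using f(10) by simp
  qed
  have B': "(J', C') \<in> B0" using J'S TS' D' C'0 by (simp add: B0_def D3_def)
  note f' = B0_facts[OF B']
  have Neq: "Nform J' C' = Nform J C"
  proof -
    have g1: "(trilin C' (b 1) (b 1) (b 1))^2 + (trilin C' (J' *v b 1) (J' *v b 1) (J' *v b 1))^2 = Nform J' C' * (rho (b 1) (J' *v b 1))^3"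
      by (rule Gen[OF B'])
    have g2: "(trilin C (Pi *v b 1) (Pi *v b 1) (Pi *v b 1))^2 + (trilin C (J *v (Pi *v b 1)) (J *v (Pi *v b 1)) (J *v (Pi *v b 1)))^2 = Nform J C * (rho (Pi *v b 1) (J *v (Pi *v b 1)))^3"
      by (rule Gen[OF B])
    have r: "rho (b 1) (J' *v b 1) = rho (Pi *v b 1) (J *v (Pi *v b 1))"
      unfolding J'v using rho_P[of P "Pi *v b 1" "J *v (Pi *v b 1)"] dP PPiv[of "b 1"] by simp
    have rpos: "rho (b 1) (J' *v b 1) > 0" using f'(3) by (simp add: rho_def matrix_vector_mult_def sum_2)
    have "Nform J' C' * (rho (b 1) (J' *v b 1))^3 = Nform J C * (rho (b 1) (J' *v b 1))^3"
      using g1 g2 unfolding r[symmetric] C'_def trilin_tpull PiJ' by simp metis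
    then show ?thesis using rpos by simp
  qed
  show ?thesis
  proof (intro conjI ballI)
    show "act P p \<in> B0" using act B' by simp
    fix X assume X: "X \<in> sl2"
    have tr: "trace (J' ** X) = trace (J ** (Pi ** X ** P))"
      unfolding J'_def by (simp add: trace_def matrix_matrix_mult_def sum_2 algebra_simps)
    show "mu f (act P p) X = mu f p (matrix_inv P ** X ** P)"
      unfolding act mu_B0[OF B'] Neq tr unfolding pJC Pinv mu_B0[OF B] ..
  qed
qed


lemma vec_vd:
  fixes f :: "real \<Rightarrow> 'a::real_normed_vector ^'n"
  assumes "\<And>i. ((\<lambda>t. f t $ i) has_vector_derivative v $ i) F"
  shows "(f has_vector_derivative v) F"
proof -
  let ?L = "Lim F (\<lambda>x. x)"
  have "((\<lambda>y. ((f y - f ?L) - (y - ?L) *\<^sub>R v) /\<^sub>R norm (y - ?L)) \<longlongrightarrow> 0) F"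
  proof (rule vec_tendstoI)
    fix i
    from assms[of i] have "((\<lambda>y. ((f y $ i - f ?L $ i) - (y - ?L) *\<^sub>R v $ i) /\<^sub>R norm (y - ?L)) \<longlongrightarrow> 0) F"
      unfolding has_vector_derivative_def has_derivative_def by simp
    then show "((\<lambda>y. (((f y - f ?L) - (y - ?L) *\<^sub>R v) /\<^sub>R norm (y - ?L)) $ i) \<longlongrightarrow> 0 $ i) F" by simp
  qed
  then show ?thesis unfolding has_vector_derivative_def has_derivative_def
    by (simp add: bounded_linear_scaleR_left)
qed

lemma matpow_scaleR: "matpow (t *\<^sub>R X) n = t^n *\<^sub>R matpow X n"
  by (induction n) (auto simp: vec_eq_iff matrix_matrix_mult_def sum_distrib_left algebra_simps)

lemma matpow_bound:
  "\<bar>matpow X n $ i $ j\<bar> \<le> (\<bar>X$1$1\<bar> + \<bar>X$1$2\<bar> + \<bar>X$2$1\<bar> + \<bar>X$2$2\<bar>) ^ n"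
proof (induction n arbitrary: i j)
  case 0
  then show ?case by (simp add: mat_def)
next
  case (Suc n)
  let ?K = "\<bar>X$1$1\<bar> + \<bar>X$1$2\<bar> + \<bar>X$2$1\<bar> + \<bar>X$2$2\<bar>"
  have row: "\<bar>X$i$1\<bar> + \<bar>X$i$2\<bar> \<le> ?K" using exhaust_2[of i] by auto
  have "\<bar>matpow X (Suc n) $ i $ j\<bar> = \<bar>X$i$1 * matpow X n $ 1 $ j + X$i$2 * matpow X n $ 2 $ j\<bar>"
    by (simp add: matrix_matrix_mult_def sum_2)
  also have "\<dots> \<le> \<bar>X$i$1\<bar> * \<bar>matpow X n $ 1 $ j\<bar> + \<bar>X$i$2\<bar> * \<bar>matpow X n $ 2 $ j\<bar>"
    using abs_triangle_ineq[of "X$i$1 * matpow X n $ 1 $ j" "X$i$2 * matpow X n $ 2 $ j"] by (simp add: abs_mult)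
  also have "\<dots> \<le> \<bar>X$i$1\<bar> * ?K^n + \<bar>X$i$2\<bar> * ?K^n"
    by (intro add_mono mult_left_mono Suc.IH) auto
  also have "\<dots> = (\<bar>X$i$1\<bar> + \<bar>X$i$2\<bar>) * ?K^n" by (simp add: algebra_simps)
  also have "\<dots> \<le> ?K * ?K^n" by (rule mult_right_mono[OF row]) simp
  finally show ?case by simp
qed

lemma norm_mat2_le: "norm (M::mat2) \<le> \<bar>M$1$1\<bar> + \<bar>M$1$2\<bar> + \<bar>M$2$1\<bar> + \<bar>M$2$2\<bar>"
proof -
  have "norm M \<le> norm (M$1) + norm (M$2)"
    unfolding norm_vec_def[of M] using L2_set_le_sum[of UNIV "\<lambda>i. norm (M$i)"] by (simp add: sum_2)
  also have "\<dots> \<le> (\<bar>M$1$1\<bar> + \<bar>M$1$2\<bar>) + (\<bar>M$2$1\<bar> + \<bar>M$2$2\<bar>)"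
    using norm_le_l1_cart[of "M$1"] norm_le_l1_cart[of "M$2"] by (simp add: sum_2)
  finally show ?thesis by simp
qed

lemma mexp_entry:
  fixes X :: mat2
  shows "mexp (t *\<^sub>R X) $ i $ j = (\<Sum>n. (matpow X n $ i $ j / fact n) * t^n)"
proof -
  let ?K = "\<bar>X$1$1\<bar> + \<bar>X$1$2\<bar> + \<bar>X$2$1\<bar> + \<bar>X$2$2\<bar>"
  define T where "T n = (1 / fact n) *\<^sub>R matpow (t *\<^sub>R X) n" for n
  have Te: "T n $ a $ c = (matpow X n $ a $ c / fact n) * t^n" for n a c
    unfolding T_def matpow_scaleR by simp
  have Tb: "\<bar>T n $ a $ c\<bar> \<le> (\<bar>t\<bar> * ?K)^n / fact n" for n a c
  proof -
    have "\<bar>T n $ a $ c\<bar> = \<bar>matpow X n $ a $ c\<bar> * \<bar>t\<bar>^n / fact n"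
      unfolding Te by (simp add: abs_mult power_abs)
    also have "\<dots> \<le> ?K^n * \<bar>t\<bar>^n / fact n"
      by (intro divide_right_mono mult_right_mono matpow_bound) auto
    finally show ?thesis by (simp add: power_mult_distrib mult.commute)
  qed
  have sm: "summable (\<lambda>n. 4 * ((\<bar>t\<bar> * ?K)^n / fact n))"
    using summable_mult[OF summable_exp[of "\<bar>t\<bar> * ?K"], of 4] by (simp add: divide_inverse mult_ac)
  have "summable T"
  proof (rule summable_comparison_test'[OF sm])
    fix n :: nat assume "n \<ge> 0"
    have "norm (T n) \<le> \<bar>T n$1$1\<bar> + \<bar>T n$1$2\<bar> + \<bar>T n$2$1\<bar> + \<bar>T n$2$2\<bar>" by (rule norm_mat2_le)
    also have "\<dots> \<le> 4 * ((\<bar>t\<bar> * ?K)^n / fact n)" using Tb[of n 1 1] Tb[of n 1 2] Tb[of n 2 1] Tb[of n 2 2] by linarith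
    finally show "norm (T n) \<le> 4 * ((\<bar>t\<bar> * ?K)^n / fact n)" .
  qed
  have bl: "bounded_linear (\<lambda>M::mat2. M $ i $ j)"
    using bounded_linear_compose[OF bounded_linear_vec_nth[of j] bounded_linear_vec_nth[of i]] by simp
  have "mexp (t *\<^sub>R X) $ i $ j = (\<Sum>n. T n $ i $ j)"
    unfolding mexp_def T_def[symmetric] using bounded_linear.suminf[OF bl \<open>summable T\<close>] by simp
  then show ?thesis unfolding Te .
qed

lemma mexp_deriv:
  fixes X :: mat2
  shows "((\<lambda>t. mexp (t *\<^sub>R X) $ i $ j) has_real_derivative X $ i $ j) (at 0)"
    and "mexp (0 *\<^sub>R X) $ i $ j = mat 1 $ i $ j"
proof -
  let ?K = "\<bar>X$1$1\<bar> + \<bar>X$1$2\<bar> + \<bar>X$2$1\<bar> + \<bar>X$2$2\<bar>"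
  define c where "c n = matpow X n $ i $ j / fact n" for n
  have sm: "summable (\<lambda>n. c n * y^n)" for y
  proof (rule summable_comparison_test'[OF summable_exp[of "\<bar>y\<bar> * ?K"]])
    fix n :: nat assume "n \<ge> 0"
    have "norm (c n * y^n) = \<bar>matpow X n $ i $ j\<bar> * \<bar>y\<bar>^n / fact n"
      unfolding c_def by (simp add: abs_mult power_abs)
    also have "\<dots> \<le> ?K^n * \<bar>y\<bar>^n / fact n"
      by (intro divide_right_mono mult_right_mono matpow_bound) auto
    finally show "norm (c n * y^n) \<le> inverse (fact n) * (\<bar>y\<bar> * ?K)^n"
      by (simp add: power_mult_distrib divide_inverse mult_ac)
  qed
  have f: "(\<lambda>t. mexp (t *\<^sub>R X) $ i $ j) = (\<lambda>t. \<Sum>n. c n * t^n)"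
    unfolding mexp_entry c_def ..
  have "((\<lambda>t. \<Sum>n. c n * t^n) has_real_derivative (\<Sum>n. diffs c n * 0^n)) (at 0)"
    by (rule termdiffs_strong_converges_everywhere[OF sm])
  moreover have "(\<Sum>n. diffs c n * 0^n) = X $ i $ j"
    by (simp only: powser_zero) (simp add: diffs_def c_def matrix_mul_rid)
  ultimately show "((\<lambda>t. mexp (t *\<^sub>R X) $ i $ j) has_real_derivative X $ i $ j) (at 0)"
    unfolding f by simp
  show "mexp (0 *\<^sub>R X) $ i $ j = mat 1 $ i $ j"
    by (simp only: mexp_entry powser_zero) simp
qed


lemma V_deriv:
  assumes B: "(J, C) \<in> B0" and X: "trace X = 0"
  shows "((\<lambda>t. act (mexp (t *\<^sub>R X)) (J, C)) has_vector_derivative (X ** J - J ** X, CV C X)) (at 0)"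
proof -
  note f = B0_facts[OF B]
  have detJ: "J$1$1 * J$2$2 - J$1$2 * J$2$1 = 1" using f(1,2) by (simp add: power2_eq_square)
  have X22: "X$2$2 = - X$1$1" using X by (simp add: trace_def sum_2)
  define M where "M t = mexp (t *\<^sub>R X)" for t
  have dM: "((\<lambda>t. M t $ i $ j) has_real_derivative X $ i $ j) (at 0)" for i j
    unfolding M_def by (rule mexp_deriv(1))
  have M0: "M 0 $ i $ j = mat 1 $ i $ j" for i j unfolding M_def using mexp_deriv(2)[of X i j] by simp
  have M0e: "M 0 $ 1 $ 1 = 1" "M 0 $ 1 $ 2 = 0" "M 0 $ 2 $ 1 = 0" "M 0 $ 2 $ 2 = 1"
    using M0 by (simp_all add: mat_def)
  define d where "d t = M t $ 1 $ 1 * M t $ 2 $ 2 - M t $ 1 $ 2 * M t $ 2 $ 1" for t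
  have detM: "det (M t) = d t" for t by (simp add: det_2 d_def)
  have d0: "d 0 = 1" by (simp add: d_def M0e)
  have dd: "(d has_real_derivative 0) (at 0)"
    unfolding d_def[abs_def]
    by (rule derivative_eq_intros dM refl)+ (simp add: M0e X22)
  obtain r where r: "r > 0" "\<And>t. dist 0 t < r \<Longrightarrow> d t \<noteq> 0"
    using continuous_at_avoid[of 0 d 0] DERIV_isCont[OF dd] d0 by (auto simp: isCont_def continuous_at)
  define Pi where "Pi t = (1 / d t) *\<^sub>R adj2 (M t)" for t
  define h where "h t = (M t ** J ** Pi t, \<chi> i j k. d t * trilin C (Pi t *v b i) (Pi t *v b j) (Pi t *v b k))" for t
  have ev: "eventually (\<lambda>t. t \<in> UNIV \<longrightarrow> h t = act (mexp (t *\<^sub>R X)) (J, C)) (nhds 0)"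
    unfolding eventually_nhds_metric
  proof (intro exI conjI allI impI)
    show "r > 0" by (fact r(1))
    fix t :: real assume "dist t 0 < r"
    then have dt: "d t \<noteq> 0" using r(2) by (simp add: dist_commute)
    show "h t = act (mexp (t *\<^sub>R X)) (J, C)"
      unfolding act_formula[OF detJ] h_def Pi_def M_def[symmetric] detM inv_adj2[of "M t", unfolded detM, OF dt] ..
  qed
  have h0: "h 0 = act (mexp (0 *\<^sub>R X)) (J, C)" using eventually_nhds_x_imp_x[OF ev] by simp
  have Pie: "Pi t $ 1 $ 1 = M t $ 2 $ 2 / d t" "Pi t $ 1 $ 2 = - M t $ 1 $ 2 / d t"
       "Pi t $ 2 $ 1 = - M t $ 2 $ 1 / d t" "Pi t $ 2 $ 2 = M t $ 1 $ 1 / d t" for t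
    by (simp_all add: Pi_def adj2_def mk2_simps)
  have Pi0: "Pi 0 $ i $ j = mat 1 $ i $ j" for i j
    using exhaust_2[of i] exhaust_2[of j] by (auto simp: Pie d0 M0e mat_def)
  have dPi: "((\<lambda>t. Pi t $ a $ c) has_real_derivative - X $ a $ c) (at 0)" for a c
  proof -
    have "((\<lambda>t. M t $ 2 $ 2 / d t) has_real_derivative - X $ 1 $ 1) (at 0)"
      by (rule derivative_eq_intros dM dd refl)+ (simp_all add: d0 M0e X22)
    moreover have "((\<lambda>t. - M t $ 1 $ 2 / d t) has_real_derivative - X $ 1 $ 2) (at 0)"
      by (rule derivative_eq_intros dM dd refl)+ (simp_all add: d0 M0e X22)
    moreover have "((\<lambda>t. - M t $ 2 $ 1 / d t) has_real_derivative - X $ 2 $ 1) (at 0)"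
      by (rule derivative_eq_intros dM dd refl)+ (simp_all add: d0 M0e X22)
    moreover have "((\<lambda>t. M t $ 1 $ 1 / d t) has_real_derivative - X $ 2 $ 2) (at 0)"
      by (rule derivative_eq_intros dM dd refl)+ (simp_all add: d0 M0e X22)
    ultimately show ?thesis using exhaust_2[of a] exhaust_2[of c] by (auto simp: Pie)
  qed
  have hd: "(h has_vector_derivative (X ** J - J ** X, CV C X)) (at 0)"
    unfolding h_def
  proof (rule has_vector_derivative_Pair)
    show "((\<lambda>t. M t ** J ** Pi t) has_vector_derivative X ** J - J ** X) (at 0)"
    proof (rule vec_vd, rule vec_vd)
      fix i j
      have "((\<lambda>t. (M t ** J ** Pi t) $ i $ j) has_real_derivative (X ** J - J ** X) $ i $ j) (at 0)"
        unfolding matrix_matrix_mult_def vec_lambda_beta sum_2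
        apply (rule derivative_eq_intros dM dPi refl)+
        using exhaust_2[of i] exhaust_2[of j] by (auto simp: M0 Pi0 mat_def matrix_matrix_mult_def sum_2 algebra_simps)
      then show "((\<lambda>t. (M t ** J ** Pi t) $ i $ j) has_vector_derivative (X ** J - J ** X) $ i $ j) (at 0)"
        by (simp add: has_real_derivative_iff_has_vector_derivative)
    qed
    show "((\<lambda>t. \<chi> i j k. d t * trilin C (Pi t *v b i) (Pi t *v b j) (Pi t *v b k)) has_vector_derivative CV C X) (at 0)"
    proof (rule vec_vd, rule vec_vd, rule vec_vd)
      fix i j k
      have "((\<lambda>t. d t * trilin C (Pi t *v b i) (Pi t *v b j) (Pi t *v b k)) has_real_derivative CV C X $ i $ j $ k) (at 0)"
        unfolding trilin_def matrix_vector_mult_def vec_lambda_beta sum_2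
        apply (rule derivative_eq_intros dd dPi refl)+
        using exhaust_2[of i] exhaust_2[of j] exhaust_2[of k]
        by (auto simp: d0 Pi0 mat_def CV_def sum_2 f(4-7) algebra_simps)
      then show "((\<lambda>t. (\<chi> i j k. d t * trilin C (Pi t *v b i) (Pi t *v b j) (Pi t *v b k)) $ i $ j $ k) has_vector_derivative CV C X $ i $ j $ k) (at 0)"
        by (simp add: has_real_derivative_iff_has_vector_derivative)
    qed
  qed
  show ?thesis
    using hd has_vector_derivative_cong_ev[OF ev h0, of "(X ** J - J ** X, CV C X)"] by simp
qed


lemma dconst: "(g has_real_derivative D) (at 0) \<Longrightarrow> (\<And>t. g t = 0) \<Longrightarrow> D = 0"
proof -
  assume d: "(g has_real_derivative D) (at 0)" and z: "\<And>t. g t = 0"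
  have "g = (\<lambda>t. 0)" using z by auto
  then have "(g has_real_derivative 0) (at 0)" by simp
  with d show "D = 0" by (rule DERIV_unique)
qed

lemma part2:
  assumes X: "X \<in> sl2" and pJC: "(J, C) \<in> B0"
    and fd: "\<And>t. t > 0 \<Longrightarrow> (f has_real_derivative f' t) (at t)"
    and G: "\<forall>t. \<gamma> t \<in> B0" "\<gamma> 0 = (J, C)" "(\<gamma> has_vector_derivative v) (at 0)"
  shows "((\<lambda>t. mu f (\<gamma> t) X) has_real_derivative omega f f' (J, C) (X ** J - J ** X, CV C X) v) (at 0)"
proof -
  define Jt where "Jt t = fst (\<gamma> t)" for t
  define Ct where "Ct t = snd (\<gamma> t)" for t
  define Jd where "Jd = fst v"
  define Cd where "Cd = snd v"
  have gt: "\<gamma> t = (Jt t, Ct t)" for t by (simp add: Jt_def Ct_def)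
  have Bt: "(Jt t, Ct t) \<in> B0" for t using G(1) gt by metis
  have Jt0: "Jt 0 = J" and Ct0: "Ct 0 = C" using G(2) by (simp_all add: Jt_def Ct_def)
  have dJ: "((\<lambda>t. Jt t $ i $ j) has_real_derivative Jd $ i $ j) (at 0)" for i j
  proof -
    have bl: "bounded_linear (\<lambda>q::mat2 \<times> ten3. fst q $ i $ j)"
      using bounded_linear_compose[OF bounded_linear_compose[OF bounded_linear_vec_nth[of j] bounded_linear_vec_nth[of i]] bounded_linear_fst] by simp
    show ?thesis using bounded_linear.has_vector_derivative[OF bl G(3)]
      by (simp add: has_real_derivative_iff_has_vector_derivative Jt_def Jd_def)
  qed
  have dC: "((\<lambda>t. Ct t $ i $ j $ k) has_real_derivative Cd $ i $ j $ k) (at 0)" for i j k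
  proof -
    have bl: "bounded_linear (\<lambda>q::mat2 \<times> ten3. snd q $ i $ j $ k)"
      using bounded_linear_compose[OF bounded_linear_compose[OF bounded_linear_compose[OF bounded_linear_vec_nth[of k] bounded_linear_vec_nth[of j]] bounded_linear_vec_nth[of i]] bounded_linear_snd] by simp
    show ?thesis using bounded_linear.has_vector_derivative[OF bl G(3)]
      by (simp add: has_real_derivative_iff_has_vector_derivative Ct_def Cd_def)
  qed
  note ft = B0_facts[OF Bt]
  note f = B0_facts[OF pJC]
  have L0: "Jd$2$2 + Jd$1$1 = 0"
    by (rule dconst[where g="\<lambda>t. Jt t $ 2 $ 2 + Jt t $ 1 $ 1"]) (rule derivative_eq_intros dJ refl | simp add: ft)+
  have L1: "2 * J$1$1 * Jd$1$1 + Jd$1$2 * J$2$1 + J$1$2 * Jd$2$1 = 0"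
  proof (rule dconst[where g="\<lambda>t. (Jt t $ 1 $ 1)^2 + Jt t $ 1 $ 2 * Jt t $ 2 $ 1 + 1"])
    show "((\<lambda>t. (Jt t $ 1 $ 1)^2 + Jt t $ 1 $ 2 * Jt t $ 2 $ 1 + 1) has_real_derivative 2 * J$1$1 * Jd$1$1 + Jd$1$2 * J$2$1 + J$1$2 * Jd$2$1) (at 0)"
      by (rule derivative_eq_intros dJ refl)+ (simp add: Jt0 algebra_simps)
    show "(Jt t $ 1 $ 1)^2 + Jt t $ 1 $ 2 * Jt t $ 2 $ 1 + 1 = 0" for t using ft(2)[of t] by simp
  qed
  have Ls: "Cd$1$2$1 = Cd$1$1$2" "Cd$2$1$1 = Cd$1$1$2" "Cd$2$1$2 = Cd$1$2$2" "Cd$2$2$1 = Cd$1$2$2"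
  proof -
    have "Cd$1$2$1 - Cd$1$1$2 = 0"
      by (rule dconst[where g="\<lambda>t. Ct t $1$2$1 - Ct t $1$1$2"]) (rule derivative_eq_intros dC refl | simp add: ft)+
    moreover have "Cd$2$1$1 - Cd$1$1$2 = 0"
      by (rule dconst[where g="\<lambda>t. Ct t $2$1$1 - Ct t $1$1$2"]) (rule derivative_eq_intros dC refl | simp add: ft)+
    moreover have "Cd$2$1$2 - Cd$1$2$2 = 0"
      by (rule dconst[where g="\<lambda>t. Ct t $2$1$2 - Ct t $1$2$2"]) (rule derivative_eq_intros dC refl | simp add: ft)+
    moreover have "Cd$2$2$1 - Cd$1$2$2 = 0"
      by (rule dconst[where g="\<lambda>t. Ct t $2$2$1 - Ct t $1$2$2"]) (rule derivative_eq_intros dC refl | simp add: ft)+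
    ultimately show "Cd$1$2$1 = Cd$1$1$2" "Cd$2$1$1 = Cd$1$1$2" "Cd$2$1$2 = Cd$1$2$2" "Cd$2$2$1 = Cd$1$2$2" by simp_all
  qed
  have LE1: "Jd$2$1 * C$1$2$2 + J$2$1 * Cd$1$2$2 - (Jd$1$2 * C$1$1$1 + J$1$2 * Cd$1$1$1 - 2 * Jd$1$1 * C$1$1$2 - 2 * J$1$1 * Cd$1$1$2) = 0"
  proof (rule dconst[where g="\<lambda>t. Jt t $2$1 * Ct t $1$2$2 - (Jt t $1$2 * Ct t $1$1$1 - 2 * Jt t $1$1 * Ct t $1$1$2)"])
    show "((\<lambda>t. Jt t $2$1 * Ct t $1$2$2 - (Jt t $1$2 * Ct t $1$1$1 - 2 * Jt t $1$1 * Ct t $1$1$2)) has_real_derivative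
       Jd$2$1 * C$1$2$2 + J$2$1 * Cd$1$2$2 - (Jd$1$2 * C$1$1$1 + J$1$2 * Cd$1$1$1 - 2 * Jd$1$1 * C$1$1$2 - 2 * J$1$1 * Cd$1$1$2)) (at 0)"
      by (rule derivative_eq_intros dJ dC refl)+ (simp add: Jt0 Ct0 algebra_simps)
    show "Jt t $2$1 * Ct t $1$2$2 - (Jt t $1$2 * Ct t $1$1$1 - 2 * Jt t $1$1 * Ct t $1$1$2) = 0" for t using ft(8)[of t] by simp
  qed
  have LE2: "Jd$2$1 * C$2$2$2 + J$2$1 * Cd$2$2$2 - (Jd$1$2 * C$1$1$2 + J$1$2 * Cd$1$1$2 - 2 * Jd$1$1 * C$1$2$2 - 2 * J$1$1 * Cd$1$2$2) = 0"
  proof (rule dconst[where g="\<lambda>t. Jt t $2$1 * Ct t $2$2$2 - (Jt t $1$2 * Ct t $1$1$2 - 2 * Jt t $1$1 * Ct t $1$2$2)"])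
    show "((\<lambda>t. Jt t $2$1 * Ct t $2$2$2 - (Jt t $1$2 * Ct t $1$1$2 - 2 * Jt t $1$1 * Ct t $1$2$2)) has_real_derivative
       Jd$2$1 * C$2$2$2 + J$2$1 * Cd$2$2$2 - (Jd$1$2 * C$1$1$2 + J$1$2 * Cd$1$1$2 - 2 * Jd$1$1 * C$1$2$2 - 2 * J$1$1 * Cd$1$2$2)) (at 0)"
      by (rule derivative_eq_intros dJ dC refl)+ (simp add: Jt0 Ct0 algebra_simps)
    show "Jt t $2$1 * Ct t $2$2$2 - (Jt t $1$2 * Ct t $1$1$2 - 2 * Jt t $1$1 * Ct t $1$2$2) = 0" for t using ft(9)[of t] by simp
  qed
  define e where "e = 1 / J$2$1"
  note g = B0_eforms[OF pJC e_def]
  have ce: "J$2$1 * e = 1" by (fact g(1))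
  have hq: "Jd$1$2 = ((J$1$1)^2 + 1) * Jd$2$1 * e^2 - 2 * J$1$1 * Jd$1$1 * e"
    using ce L1 g(2) by algebra
  have l2: "Cd$1$2$2 = -2 * J$1$1 * C$1$1$1 * Jd$1$1 * e^2 + 2 * ((J$1$1)^2+1) * C$1$1$1 * Jd$2$1 * e^3
      - ((J$1$1)^2+1) * Cd$1$1$1 * e^2 - 2 * C$1$1$2 * Jd$1$1 * e - 2 * J$1$1 * Cd$1$1$2 * e + 2 * J$1$1 * C$1$1$2 * Jd$2$1 * e^2"
    using ce LE1 hq g(2) g(3) by algebra
  have l3: "Cd$2$2$2 = 6 * J$1$1 * C$1$1$2 * Jd$1$1 * e^2 - 6 * (J$1$1)^2 * C$1$1$2 * Jd$2$1 * e^3 + 2 * C$1$1$2 * Jd$2$1 * e^3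
      + 3 * (J$1$1)^2 * Cd$1$1$2 * e^2 - Cd$1$1$2 * e^2 + 6 * (J$1$1)^2 * C$1$1$1 * Jd$1$1 * e^3 + 2 * C$1$1$1 * Jd$1$1 * e^3
      - 6 * (J$1$1)^3 * C$1$1$1 * Jd$2$1 * e^4 - 6 * J$1$1 * C$1$1$1 * Jd$2$1 * e^4 + 2 * (J$1$1)^3 * Cd$1$1$1 * e^3 + 2 * J$1$1 * Cd$1$1$1 * e^3"
    using ce LE2 hq g(2) g(3) g(4) l2 by algebra
  have X22: "X$2$2 = - X$1$1" using X by (simp add: sl2_def trace_def sum_2)
  have L0': "Jd$2$2 = - Jd$1$1" using L0 by simp
  have coreI: "1/3 * ipA' J (A0 (pA J (CV C X))) (A0 (\<lambda>Y. - (pA J Cd Y ** J) - (pA J C Y ** Jd)))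
       - 1/6 * ipA' J (Atr (pA J (CV C X))) (Atr (\<lambda>Y. - (pA J Cd Y ** J) - (pA J C Y ** Jd)))
       = - NdS J C Jd Cd * trace (J ** X)"
    by (rule core[where a="J$1$1" and bb="J$1$2" and c="J$2$1" and e=e and pp="Jd$1$1" and qq="Jd$1$2" and ss="Jd$2$1"
        and x="X$1$1" and y="X$1$2" and z="X$2$1" and ?k0.0="C$1$1$1" and ?k1.0="C$1$1$2" and ?k2.0="C$1$2$2" and ?k3.0="C$2$2$2"
        and ?l0.0="Cd$1$1$1" and ?l1.0="Cd$1$1$2" and ?l2.0="Cd$1$2$2" and ?l3.0="Cd$2$2$2"])
      (rule refl f(1) f(3) f(4) f(5) f(6) f(7) g(1) g(2) g(3) g(4) L0' Ls hq l2 l3 X22)+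
  have c0: "J$2$1 \<noteq> 0" using f(3) by simp
  have Nd: "((\<lambda>t. Nform (Jt t) (Ct t)) has_real_derivative NdS J C Jd Cd) (at 0)"
    unfolding Nform_def NdS_def
    apply (rule derivative_eq_intros dJ dC refl)+
    using c0 by (simp_all add: Jt0 Ct0 field_simps)
  define N0 where "N0 = Nform J C"
  have N0pos: "N0 > 0" unfolding N0_def by (rule Nform_pos[OF pJC])
  have fN: "(f has_real_derivative f' N0) (at (Nform (Jt 0) (Ct 0)))"
    using fd[OF N0pos] unfolding N0_def Jt0 Ct0 .
  have fc: "((\<lambda>t. f (Nform (Jt t) (Ct t))) has_real_derivative f' N0 * NdS J C Jd Cd) (at 0)"
    by (rule DERIV_chain2[OF fN Nd])
  have trd: "((\<lambda>t. trace (Jt t ** X)) has_real_derivative trace (Jd ** X)) (at 0)"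
    unfolding trace_def matrix_matrix_mult_def vec_lambda_beta sum_2
    by (rule derivative_eq_intros dJ refl)+ simp
  have mueq: "(\<lambda>t. mu f (\<gamma> t) X) = (\<lambda>t. (1 - f (Nform (Jt t) (Ct t))) * trace (Jt t ** X))"
    unfolding gt using mu_B0[OF Bt] by simp
  have md: "((\<lambda>t. mu f (\<gamma> t) X) has_real_derivative
      (- (f' N0 * NdS J C Jd Cd)) * trace (J ** X) + (1 - f N0) * trace (Jd ** X)) (at 0)"
    unfolding mueq
    by (rule derivative_eq_intros fc trd refl)+ (simp add: Jt0 Ct0 N0_def)
  have detJ: "J$1$1 * J$2$2 - J$1$2 * J$2$1 = 1" by (fact g(5))
  have pk: "pickA J D = pA J D" for D by (rule ext, rule pickA_eq[OF detJ])
  have nJ: "norm0sq J (pA J C) = N0" using N_B0[OF pJC] unfolding pk N0_def .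
  have ipJe: "ipJ (X ** J - J ** X) (- (J ** Jd)) = trace (Jd ** X)"
    unfolding ipJ_def using f(1) f(2) L0 L1 X22
    by (simp add: trace_def matrix_matrix_mult_def sum_2) algebra
  have hW: "(\<lambda>Y. - (pA J Cd Y ** J) - (pA J C Y ** Jd)) (r *\<^sub>R Y) = r *\<^sub>R (\<lambda>Y. - (pA J Cd Y ** J) - (pA J C Y ** Jd)) Y" for r Y
    by (rule W_hom)
  have ip1: "ipA J (A0 (pA J (CV C X))) (A0 (\<lambda>Y. - (pA J Cd Y ** J) - (pA J C Y ** Jd)))
     = ipA' J (A0 (pA J (CV C X))) (A0 (\<lambda>Y. - (pA J Cd Y ** J) - (pA J C Y ** Jd)))"
    by (rule ipA_hom[OF A0_hom[OF pA_hom] A0_hom[OF hW] f(3)])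
  have ip2: "ipA J (Atr (pA J (CV C X))) (Atr (\<lambda>Y. - (pA J Cd Y ** J) - (pA J C Y ** Jd)))
     = ipA' J (Atr (pA J (CV C X))) (Atr (\<lambda>Y. - (pA J Cd Y ** J) - (pA J C Y ** Jd)))"
    by (rule ipA_hom[OF Atr_hom[OF pA_hom] Atr_hom[OF hW] f(3)])
  have v: "v = (Jd, Cd)" by (simp add: Jd_def Cd_def)
  have om: "omega f f' (J, C) (X ** J - J ** X, CV C X) v
      = (1 - f N0) * trace (Jd ** X) + f' N0 * (- NdS J C Jd Cd * trace (J ** X))"
  proof -
    have "omega f f' (J, C) (X ** J - J ** X, CV C X) v
       = (1 - f N0) * ipJ (X ** J - J ** X) (- (J ** Jd))
         + f' N0 / 3 * ipA J (A0 (pA J (CV C X))) (A0 (\<lambda>Y. - (pA J Cd Y ** J) - (pA J C Y ** Jd)))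
         - f' N0 / 6 * ipA J (Atr (pA J (CV C X))) (Atr (\<lambda>Y. - (pA J Cd Y ** J) - (pA J C Y ** Jd)))"
      unfolding omega_def gmet_def Icx_def Let_def v by (simp add: pk nJ)
    also have "\<dots> = (1 - f N0) * trace (Jd ** X) + f' N0 * (1/3 * ipA' J (A0 (pA J (CV C X))) (A0 (\<lambda>Y. - (pA J Cd Y ** J) - (pA J C Y ** Jd)))
       - 1/6 * ipA' J (Atr (pA J (CV C X))) (Atr (\<lambda>Y. - (pA J Cd Y ** J) - (pA J C Y ** Jd))))"
      unfolding ipJe ip1 ip2 by (simp add: algebra_simps)
    also have "\<dots> = (1 - f N0) * trace (Jd ** X) + f' N0 * (- NdS J C Jd Cd * trace (J ** X))"
      unfolding coreI ..
    finally show ?thesis .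
  qed
  show ?thesis using md unfolding om by (simp add: algebra_simps)
qed

theorem theoremC:
  fixes f f' :: "real \<Rightarrow> real"
  assumes smooth: "\<exists>F :: nat \<Rightarrow> real \<Rightarrow> real. F 0 = f \<and> F 1 = f' \<and>
                     (\<forall>k t. t \<ge> 0 \<longrightarrow> (F k has_real_derivative F (Suc k) t) (at t within {0..}))"
    and nonpos: "\<forall>t \<ge> 0. f t \<le> 0"
    and decr: "\<forall>t \<ge> 0. f' t < 0"
    and lim: "filterlim f at_bot at_top"
  shows "(\<forall>P \<in> SL2. \<forall>p \<in> B0. act P p \<in> B0 \<and>
            (\<forall>X \<in> sl2. mu f (act P p) X = mu f p (matrix_inv P ** X ** P)))
       \<and> (\<forall>X \<in> sl2. \<forall>p \<in> B0. \<exists>V.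
            ((\<lambda>t. act (mexp (t *\<^sub>R X)) p) has_vector_derivative V) (at 0) \<and>
            (\<forall>\<gamma> v. (\<forall>t. \<gamma> t \<in> B0) \<longrightarrow> \<gamma> 0 = p \<longrightarrow> (\<gamma> has_vector_derivative v) (at 0) \<longrightarrow>
               ((\<lambda>t. mu f (\<gamma> t) X) has_real_derivative omega f f' p V v) (at 0)))"
proof -
  obtain F :: "nat \<Rightarrow> real \<Rightarrow> real" where F: "F 0 = f" "F 1 = f'"
    "\<And>k t. t \<ge> 0 \<Longrightarrow> (F k has_real_derivative F (Suc k) t) (at t within {0..})"
    using smooth by blast
  have fd: "(f has_real_derivative f' t) (at t)" if t: "t > 0" for t
  proof -
    have "(f has_real_derivative f' t) (at t within {0..})"
      using F(3)[of t 0] t F(1,2) by simp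
    then have "(f has_real_derivative f' t) (at t within {0<..})"
      by (rule has_field_derivative_subset) auto
    then show ?thesis using at_within_open[of t "{0<..}"] t by simp
  qed
  show ?thesis
  proof (rule conjI)
    show "\<forall>P \<in> SL2. \<forall>p \<in> B0. act P p \<in> B0 \<and>
            (\<forall>X \<in> sl2. mu f (act P p) X = mu f p (matrix_inv P ** X ** P))"
      using part1 by blast
  next
    show "\<forall>X \<in> sl2. \<forall>p \<in> B0. \<exists>V.
            ((\<lambda>t. act (mexp (t *\<^sub>R X)) p) has_vector_derivative V) (at 0) \<and>
            (\<forall>\<gamma> v. (\<forall>t. \<gamma> t \<in> B0) \<longrightarrow> \<gamma> 0 = p \<longrightarrow> (\<gamma> has_vector_derivative v) (at 0) \<longrightarrow>
               ((\<lambda>t. mu f (\<gamma> t) X) has_real_derivative omega f f' p V v) (at 0))"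
    proof (intro ballI)
    fix X p assume X: "X \<in> sl2" and p: "p \<in> B0"
    obtain J C where pJC: "p = (J, C)" by (cases p)
    have B: "(J, C) \<in> B0" using p pJC by simp
    have tX: "trace X = 0" using X by (simp add: sl2_def)
    show "\<exists>V. ((\<lambda>t. act (mexp (t *\<^sub>R X)) p) has_vector_derivative V) (at 0) \<and>
            (\<forall>\<gamma> v. (\<forall>t. \<gamma> t \<in> B0) \<longrightarrow> \<gamma> 0 = p \<longrightarrow> (\<gamma> has_vector_derivative v) (at 0) \<longrightarrow>
               ((\<lambda>t. mu f (\<gamma> t) X) has_real_derivative omega f f' p V v) (at 0))"
    proof (intro exI conjI allI impI)
      show "((\<lambda>t. act (mexp (t *\<^sub>R X)) p) has_vector_derivative (X ** J - J ** X, CV C X)) (at 0)"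
        unfolding pJC by (rule V_deriv[OF B tX])
      fix \<gamma> v assume "\<forall>t. \<gamma> t \<in> B0" "\<gamma> 0 = p" "(\<gamma> has_vector_derivative v) (at 0)"
      then show "((\<lambda>t. mu f (\<gamma> t) X) has_real_derivative omega f f' p (X ** J - J ** X, CV C X) v) (at 0)"
        unfolding pJC using part2[OF X B fd] by blast
    qed
    qed
  qed
qed


end
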